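(* Let $G$ be a finite group acting on $X=G$ by left multiplication, so that $\mathbb{C}X=\mathbb{C}G$ is the regular module. Let $\{1\}=G_1<\cdots<G_n=G$ be a chain of subgroups with $\mathcal{R}(G_1),\dots,\mathcal{R}(G_n)$ compatible with respect to $\mathbb{C}X$, and let $\mathcal{B}_1,\dots,\mathcal{B}_n$ be as in the standing setup below. Put $q_j=[G_j:G_{j-1}]$. Then for every $f\in\mathbb{C}G$, $[f]_{\mathcal{B}_n}$ can be computed from $[f]_{\mathcal{B}_1}$ (by successively multiplying by $C(\mathcal{B}_2,\mathcal{B}_1),\dots,C(\mathcal{B}_n,\mathcal{B}_{n-1})$, using only their nonzero entries) with strictly fewer than \[2\sum_{j=2}^n q_j^2\,q_{j+1}\cdots q_n\,d^3(G_{j-1})\] complex arithmetic operations (additions and multiplications).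
   Context: For a finite group $H$ with irreducible complex representations of dimensions $d_1,\dots,d_s$, $d^3(H)=d_1^3+\cdots+d_s^3$. For a finite group $G$, $\mathcal{R}(G)$ denotes a fixed complete set of pairwise inequivalent irreducible complex matrix representations of $G$. For a finite-dimensional $\mathbb{C}G$-module $M$ with ordered basis $\mathcal{B}$, $[g]_{\mathcal{B}}$ denotes the matrix of the action of $g$ with respect to $\mathcal{B}$; $\mathcal{B}$ is a symmetry adapted basis of $M$ with respect to $\mathcal{R}(G)$ if there is a fixed partition of the positions into consecutive blocks such that for every $g\in G$, $[g]_{\mathcal{B}}$ is block diagonal with respect to these blocks and each block equals $\rho(g)$ for some $\rho\in\mathcal{R}(G)$ depending only on the block. Standing setup: $G$ acts on a finite set $X$; $\mathbb{C}X$ is the space of functions $X\to\mathbb{C}$ with $(g\cdot f)(x)=f(g^{-1}x)$, each $x\in X$ is identified with its indicator function, and the standard basis of $\mathbb{C}X$ is $X$ itself; for a union $Y$ of orbits of a subgroup, $\mathbb{C}Y$ is regarded as a submodule of $\mathbb{C}X$. The sets $\mathcal{R}(G_1),\dots,\mathcal{R}(G_n)$ are compatible with respect to $\mathbb{C}X$ if some basis of $\mathbb{C}X$ is symmetry adapted with respect to $\mathcal{R}(G_i)$ (for $\mathbb{C}X$ restricted to $G_i$) for every $i$. For $1\le j\le n$, $\mathcal{B}_j$ is an orbital symmetry adapted basis with respect to $\mathcal{R}(G_1),\dots,\mathcal{R}(G_j)$: the disjoint union, over the $G_j$-orbits $Y\subseteq X$, of bases of $\mathbb{C}Y$ each symmetry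 adapted with respect to $\mathcal{R}(G_i)$ for every $i\le j$; $\mathcal{B}_1$ is the standard basis. For bases $\mathcal{B},\mathcal{B}'$, $[v]_{\mathcal{B}}$ is the coordinate vector and $C(\mathcal{B},\mathcal{B}')$ is the matrix with $C(\mathcal{B},\mathcal{B}')[v]_{\mathcal{B}'}=[v]_{\mathcal{B}}$. *)

theory Defs
  imports "HOL-Algebra.Coset" "Jordan_Normal_Form.Matrix"
begin

(* Functions X -> C with X = carrier G: represented as 'a => complex, zero outside carrier G.
   Left regular action: (g . f)(x) = f(g^-1 x). *)
definition reg_act :: "('a, 'b) monoid_scheme \<Rightarrow> 'a \<Rightarrow> ('a \<Rightarrow> complex) \<Rightarrow> ('a \<Rightarrow> complex)" where
  "reg_act G g f = (\<lambda>x. if x \<in> carrier G then f (monoid.mult G (inv\<^bsub>G\<^esub> g) x) else 0)"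

definition fun_space :: "'a set \<Rightarrow> ('a \<Rightarrow> complex) set" where
  "fun_space Y = {f. \<forall>x. x \<notin> Y \<longrightarrow> f x = 0}"

definition lincomb :: "complex vec \<Rightarrow> ('a \<Rightarrow> complex) list \<Rightarrow> ('a \<Rightarrow> complex)" where
  "lincomb c bs = (\<lambda>x. \<Sum>k<length bs. c $ k * (bs ! k) x)"

definition is_basis_of :: "'a set \<Rightarrow> ('a \<Rightarrow> complex) list \<Rightarrow> bool" where
  "is_basis_of Y bs \<longleftrightarrow> set bs \<subseteq> fun_space Y \<and>
     (\<forall>f \<in> fun_space Y. \<exists>!c. c \<in> carrier_vec (length bs) \<and> f = lincomb c bs)"

definition coords :: "('a \<Rightarrow> complex) list \<Rightarrow> ('a \<Rightarrow> complex) \<Rightarrow> complex vec" where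
  "coords bs f = (THE c. c \<in> carrier_vec (length bs) \<and> f = lincomb c bs)"

definition act_mat :: "('a, 'b) monoid_scheme \<Rightarrow> ('a \<Rightarrow> complex) list \<Rightarrow> 'a \<Rightarrow> complex mat" where
  "act_mat G bs g = mat (length bs) (length bs) (\<lambda>(i, k). coords bs (reg_act G g (bs ! k)) $ i)"

(* change of basis matrix C(B,B'):  C [v]_B' = [v]_B *)
definition change_mat :: "('a \<Rightarrow> complex) list \<Rightarrow> ('a \<Rightarrow> complex) list \<Rightarrow> complex mat" where
  "change_mat B B' = mat (length B) (length B') (\<lambda>(i, k). coords B (B' ! k) $ i)"

definition rep_dim :: "('a, 'b) monoid_scheme \<Rightarrow> ('a \<Rightarrow> complex mat) \<Rightarrow> nat" where
  "rep_dim G \<rho> = dim_row (\<rho> \<one>\<^bsub>G\<^esub>)"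

definition is_mat_rep :: "('a, 'b) monoid_scheme \<Rightarrow> 'a set \<Rightarrow> nat \<Rightarrow> ('a \<Rightarrow> complex mat) \<Rightarrow> bool" where
  "is_mat_rep G H d \<rho> \<longleftrightarrow> (\<forall>h \<in> H. \<rho> h \<in> carrier_mat d d) \<and>
     (\<forall>h1 \<in> H. \<forall>h2 \<in> H. \<rho> (monoid.mult G h1 h2) = \<rho> h1 * \<rho> h2) \<and> \<rho> \<one>\<^bsub>G\<^esub> = 1\<^sub>m d"

definition is_invariant_subspace :: "'a set \<Rightarrow> nat \<Rightarrow> ('a \<Rightarrow> complex mat) \<Rightarrow> complex vec set \<Rightarrow> bool" where
  "is_invariant_subspace H d \<rho> W \<longleftrightarrow> W \<subseteq> carrier_vec d \<and> 0\<^sub>v d \<in> W \<and>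
     (\<forall>v \<in> W. \<forall>w \<in> W. v + w \<in> W) \<and> (\<forall>a. \<forall>v \<in> W. a \<cdot>\<^sub>v v \<in> W) \<and>
     (\<forall>h \<in> H. \<forall>v \<in> W. \<rho> h *\<^sub>v v \<in> W)"

definition is_irrep :: "('a, 'b) monoid_scheme \<Rightarrow> 'a set \<Rightarrow> ('a \<Rightarrow> complex mat) \<Rightarrow> bool" where
  "is_irrep G H \<rho> \<longleftrightarrow> (let d = rep_dim G \<rho> in
     is_mat_rep G H d \<rho> \<and> 0 < d \<and>
     \<not> (\<exists>W. is_invariant_subspace H d \<rho> W \<and> W \<noteq> {0\<^sub>v d} \<and> W \<noteq> carrier_vec d))"

definition equiv_reps :: "('a, 'b) monoid_scheme \<Rightarrow> 'a set \<Rightarrow> ('a \<Rightarrow> complex mat) \<Rightarrow> ('a \<Rightarrow> complex mat) \<Rightarrow> bool" where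
  "equiv_reps G H \<rho> \<sigma> \<longleftrightarrow> rep_dim G \<rho> = rep_dim G \<sigma> \<and>
     (\<exists>P. P \<in> carrier_mat (rep_dim G \<rho>) (rep_dim G \<rho>) \<and> invertible_mat P \<and>
        (\<forall>h \<in> H. P * \<rho> h = \<sigma> h * P))"

definition complete_irreps :: "('a, 'b) monoid_scheme \<Rightarrow> 'a set \<Rightarrow> ('a \<Rightarrow> complex mat) set \<Rightarrow> bool" where
  "complete_irreps G H R \<longleftrightarrow> (\<forall>\<rho> \<in> R. is_irrep G H \<rho>) \<and>
     (\<forall>\<rho> \<in> R. \<forall>\<sigma> \<in> R. \<rho> \<noteq> \<sigma> \<longrightarrow> \<not> equiv_reps G H \<rho> \<sigma>) \<and>
     (\<forall>\<sigma>. is_irrep G H \<sigma> \<longrightarrow> (\<exists>\<rho> \<in> R. equiv_reps G H \<sigma> \<rho>))"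

definition d3 :: "('a, 'b) monoid_scheme \<Rightarrow> ('a \<Rightarrow> complex mat) set \<Rightarrow> nat" where
  "d3 G R = (\<Sum>\<rho> \<in> R. rep_dim G \<rho> ^ 3)"

fun block_diag :: "complex mat list \<Rightarrow> complex mat" where
  "block_diag [] = 0\<^sub>m 0 0"
| "block_diag (A # As) = four_block_mat A (0\<^sub>m (dim_row A) (dim_col (block_diag As)))
      (0\<^sub>m (dim_row (block_diag As)) (dim_col A)) (block_diag As)"

definition sym_adapted :: "('a, 'b) monoid_scheme \<Rightarrow> 'a set \<Rightarrow> ('a \<Rightarrow> complex mat) set
    \<Rightarrow> ('a \<Rightarrow> complex) list \<Rightarrow> bool" where
  "sym_adapted G H R bs \<longleftrightarrow> (\<exists>\<rho>s. set \<rho>s \<subseteq> R \<and>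
     (\<forall>h \<in> H. act_mat G bs h = block_diag (map (\<lambda>\<rho>. \<rho> h) \<rho>s)))"

(* orbital symmetry adapted basis w.r.t. R(G_1),...,R(G_j): concatenation, over the G_j-orbits Y
   (= right cosets G_j x under left multiplication), of bases of CY symmetry adapted w.r.t. all
   R(G_i), i <= j *)
definition orbital_sab :: "('a, 'b) monoid_scheme \<Rightarrow> (nat \<Rightarrow> 'a set) \<Rightarrow> (nat \<Rightarrow> ('a \<Rightarrow> complex mat) set)
    \<Rightarrow> nat \<Rightarrow> ('a \<Rightarrow> complex) list \<Rightarrow> bool" where
  "orbital_sab G Gs R j B \<longleftrightarrow> (\<exists>Ys Ls. distinct Ys \<and> set Ys = rcosets\<^bsub>G\<^esub> (Gs j) \<and>
     length Ls = length Ys \<and>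
     (\<forall>k < length Ys. is_basis_of (Ys ! k) (Ls ! k) \<and>
        (\<forall>i \<in> {1..j}. sym_adapted G (Gs i) (R i) (Ls ! k))) \<and>
     B = concat Ls)"

(* number of complex additions/multiplications to compute C*v using only nonzero entries of C:
   a row with k > 0 nonzero entries costs k multiplications and k-1 additions *)
definition sparse_matvec_ops :: "complex mat \<Rightarrow> nat" where
  "sparse_matvec_ops C = (\<Sum>i < dim_row C.
      let k = card {j. j < dim_col C \<and> C $$ (i, j) \<noteq> 0} in if k = 0 then 0 else 2 * k - 1)"

end

theory Submission
  imports Defs "Jordan_Normal_Form.Spectral_Radius" "Jordan_Normal_Form.Determinant"
begin


lemma lincomb_in_space:
  assumes "set bs \<subseteq> fun_space Y"
  shows "lincomb c bs \<in> fun_space Y"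
  using assms unfolding fun_space_def lincomb_def
  by (auto intro!: sum.neutral simp: subset_iff in_set_conv_nth)

lemma basis_coords:
  assumes "is_basis_of Y bs" "f \<in> fun_space Y"
  shows "coords bs f \<in> carrier_vec (length bs)" "f = lincomb (coords bs f) bs"
proof -
  from assms have ex: "\<exists>!c. c \<in> carrier_vec (length bs) \<and> f = lincomb c bs"
    unfolding is_basis_of_def by auto
  have "coords bs f \<in> carrier_vec (length bs) \<and> f = lincomb (coords bs f) bs"
    unfolding coords_def by (rule theI'[OF ex])
  then show "coords bs f \<in> carrier_vec (length bs)" "f = lincomb (coords bs f) bs" by auto
qed

lemma coords_unique:
  assumes "is_basis_of Y bs" "c \<in> carrier_vec (length bs)" "f = lincomb c bs"
  shows "coords bs f = c"
proof -
  have f: "f \<in> fun_space Y" using assms lincomb_in_space unfolding is_basis_of_def by blast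
  from assms f have ex: "\<exists>!c. c \<in> carrier_vec (length bs) \<and> f = lincomb c bs"
    unfolding is_basis_of_def by auto
  show ?thesis unfolding coords_def
    by (rule the1_equality[OF ex]) (use assms in auto)
qed

lemma basis_in_space: "is_basis_of Y bs \<Longrightarrow> i < length bs \<Longrightarrow> bs ! i \<in> fun_space Y"
  unfolding is_basis_of_def by auto

lemma coords_nth:
  assumes "is_basis_of Y bs" "i < length bs"
  shows "coords bs (bs ! i) = unit_vec (length bs) i"
proof (rule coords_unique[OF assms(1)])
  show "unit_vec (length bs) i \<in> carrier_vec (length bs)" by simp
  show "bs ! i = lincomb (unit_vec (length bs) i) bs"
    unfolding lincomb_def using assms(2)
    by (auto simp: unit_vec_def if_distrib[of "\<lambda>c. c * _"] cong: if_cong)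
qed

lemma sum_in_space:
  assumes "\<And>k. k \<in> I \<Longrightarrow> f k \<in> fun_space Y"
  shows "(\<lambda>x. \<Sum>k\<in>I. a k * f k x) \<in> fun_space Y"
  using assms unfolding fun_space_def by auto

lemma coords_sum:
  assumes B: "is_basis_of Y bs" and I: "finite I" and f: "\<And>k. k \<in> I \<Longrightarrow> f k \<in> fun_space Y"
  shows "coords bs (\<lambda>x. \<Sum>k\<in>I. a k * f k x) = vec (length bs) (\<lambda>i. \<Sum>k\<in>I. a k * coords bs (f k) $ i)"
proof (rule coords_unique[OF B])
  show "vec (length bs) (\<lambda>i. \<Sum>k\<in>I. a k * coords bs (f k) $ i) \<in> carrier_vec (length bs)" by simp
  have e: "f k x = (\<Sum>i<length bs. coords bs (f k) $ i * (bs ! i) x)" if "k \<in> I" for k x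
    using basis_coords(2)[OF B f[OF that]] unfolding lincomb_def by metis
  show "(\<lambda>x. \<Sum>k\<in>I. a k * f k x) = lincomb (vec (length bs) (\<lambda>i. \<Sum>k\<in>I. a k * coords bs (f k) $ i)) bs"
  proof (rule ext)
    fix x
    have "(\<Sum>k\<in>I. a k * f k x) = (\<Sum>k\<in>I. \<Sum>i<length bs. a k * coords bs (f k) $ i * (bs ! i) x)"
      by (simp add: e sum_distrib_left mult.assoc)
    also have "\<dots> = (\<Sum>i<length bs. \<Sum>k\<in>I. a k * coords bs (f k) $ i * (bs ! i) x)"
      by (rule sum.swap)
    also have "\<dots> = lincomb (vec (length bs) (\<lambda>i. \<Sum>k\<in>I. a k * coords bs (f k) $ i)) bs x"
      unfolding lincomb_def by (simp add: sum_distrib_right)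
    finally show "(\<Sum>k\<in>I. a k * f k x) = lincomb (vec (length bs) (\<lambda>i. \<Sum>k\<in>I. a k * coords bs (f k) $ i)) bs x" .
  qed
qed


context group begin

lemma reg_act_sum:
  "reg_act G h (\<lambda>x. \<Sum>k\<in>I. a k * f k x) = (\<lambda>x. \<Sum>k\<in>I. a k * reg_act G h (f k) x)"
  unfolding reg_act_def by auto

definition stable :: "'a set \<Rightarrow> 'a \<Rightarrow> bool" where
  "stable Y h \<longleftrightarrow> (\<forall>y\<in>carrier G. inv h \<otimes> y \<in> Y \<longrightarrow> y \<in> Y)"

lemma reg_act_space:
  assumes "stable Y h" "f \<in> fun_space Y"
  shows "reg_act G h f \<in> fun_space Y"
  using assms unfolding stable_def fun_space_def reg_act_def by auto

lemma coset_stable: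
  assumes H: "subgroup H G" and x: "x \<in> carrier G" and h: "h \<in> H"
  shows "stable (H #> x) h"
  unfolding stable_def
proof (intro ballI impI)
  fix y assume y: "y \<in> carrier G" and "inv h \<otimes> y \<in> H #> x"
  then obtain h' where h': "h' \<in> H" "inv h \<otimes> y = h' \<otimes> x" unfolding r_coset_def by auto
  have hc: "h \<in> carrier G" by (rule subgroup.mem_carrier[OF H h])
  have hc': "h' \<in> carrier G" by (rule subgroup.mem_carrier[OF H h'(1)])
  have "y = h \<otimes> (inv h \<otimes> y)" using hc y by (simp add: m_assoc[symmetric])
  also have "\<dots> = h \<otimes> (h' \<otimes> x)" by (simp only: h'(2))
  also have "\<dots> = (h \<otimes> h') \<otimes> x" using hc hc' x by (rule m_assoc[symmetric])
  finally have "y = (h \<otimes> h') \<otimes> x" .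
  moreover have "h \<otimes> h' \<in> H" by (rule subgroup.m_closed[OF H h h'(1)])
  ultimately show "y \<in> H #> x" unfolding r_coset_def by blast
qed

lemma act_expand:
  assumes B: "is_basis_of Y bs" and st: "stable Y h" and k: "k < length bs"
  shows "reg_act G h (bs ! k) = (\<lambda>x. \<Sum>l<length bs. act_mat G bs h $$ (l, k) * (bs ! l) x)"
proof -
  have sp: "reg_act G h (bs ! k) \<in> fun_space Y" by (rule reg_act_space[OF st basis_in_space[OF B k]])
  show ?thesis
    apply (subst basis_coords(2)[OF B sp])
    unfolding lincomb_def act_mat_def using k by auto
qed

lemma coords_act:
  assumes B: "is_basis_of Y bs" and st: "stable Y h" and f: "f \<in> fun_space Y"
  shows "coords bs (reg_act G h f) = act_mat G bs h *\<^sub>v coords bs f"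
proof -
  define c where "c = coords bs f"
  have c: "c \<in> carrier_vec (length bs)" unfolding c_def by (rule basis_coords(1)[OF B f])
  have fe: "f = (\<lambda>x. \<Sum>k\<in>{..<length bs}. c $ k * (bs ! k) x)"
    using basis_coords(2)[OF B f] unfolding lincomb_def c_def by simp
  have "reg_act G h f = (\<lambda>x. \<Sum>k\<in>{..<length bs}. c $ k * reg_act G h (bs ! k) x)"
    by (subst fe) (rule reg_act_sum)
  note e = this
  have "coords bs (reg_act G h f) = vec (length bs) (\<lambda>i. \<Sum>k\<in>{..<length bs}. c $ k * coords bs (reg_act G h (bs ! k)) $ i)"
    unfolding e by (rule coords_sum[OF B]) (auto intro: reg_act_space[OF st] basis_in_space[OF B])
  also have "\<dots> = act_mat G bs h *\<^sub>v c"
    using c by (intro eq_vecI) (simp_all add: act_mat_def mult_mat_vec_def scalar_prod_def row_def mult.commute atLeast0LessThan)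
  finally show ?thesis unfolding c_def .
qed

end


definition off :: "nat list \<Rightarrow> nat \<Rightarrow> nat" where
  "off ns t = sum_list (take t ns)"

lemma off_0[simp]: "off ns 0 = 0" unfolding off_def by simp
lemma off_Cons_Suc[simp]: "off (n # ns) (Suc t) = n + off ns t" unfolding off_def by simp

lemma sum_split:
  "(\<Sum>i<sum_list ns. g i) = (\<Sum>t<length ns. \<Sum>r<ns ! t. g (off ns t + r))"
proof (induction ns arbitrary: g)
  case Nil then show ?case by simp
next
  case (Cons n ns)
  have "(\<Sum>i<sum_list (n # ns). g i) = (\<Sum>i<n + sum_list ns. g i)" by simp
  also have "\<dots> = (\<Sum>i<n. g i) + (\<Sum>i<sum_list ns. g (n + i))"
  proof -
    have sh: "sum g {n..<n + sum_list ns} = (\<Sum>i = 0..<sum_list ns. g (n + i))"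
      by (rule sum.reindex_bij_witness[of _ "\<lambda>i. n + i" "\<lambda>i. i - n"]) auto
    show ?thesis
      by (simp add: sum.atLeastLessThan_concat[of 0 n "n + sum_list ns", symmetric] lessThan_atLeast0 sh)
  qed
  also have "(\<Sum>i<sum_list ns. g (n + i)) = (\<Sum>t<length ns. \<Sum>r<ns ! t. g (n + (off ns t + r)))"
    by (rule Cons.IH)
  also have "(\<Sum>i<n. g i) + \<dots> = (\<Sum>t<length (n # ns). \<Sum>r<(n # ns) ! t. g (off (n # ns) t + r))"
    unfolding length_Cons sum.lessThan_Suc_shift by (simp add: add.assoc)
  finally show ?case .
qed

lemma off_mono_bound:
  assumes "t < length ns" "r < ns ! t"
  shows "off ns t + r < sum_list ns"
  using assms
proof (induction ns arbitrary: t)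
  case Nil then show ?case by simp
next
  case (Cons n ns) then show ?case by (cases t) auto
qed

lemma off_inj:
  assumes "t < length ns" "r < ns ! t" "t' < length ns" "r' < ns ! t'"
    and "off ns t + r = off ns t' + r'"
  shows "t = t' \<and> r = r'"
  using assms
proof (induction ns arbitrary: t t')
  case Nil then show ?case by simp
next
  case (Cons n ns)
  show ?case
  proof (cases t; cases t')
    fix a b assume "t = Suc a" "t' = Suc b"
    with Cons show ?thesis by auto
  qed (use Cons in auto)
qed

lemma concat_nth_off:
  assumes "t < length Ls" "r < length (Ls ! t)"
  shows "concat Ls ! (off (map length Ls) t + r) = Ls ! t ! r"
  using assms
proof (induction Ls arbitrary: t)
  case Nil then show ?case by simp
next
  case (Cons L Ls) then show ?case by (cases t) (auto simp: nth_append)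
qed

lemma bd_dims[simp]:
  "dim_row (block_diag Ms) = sum_list (map dim_row Ms)"
  "dim_col (block_diag Ms) = sum_list (map dim_col Ms)"
  by (induction Ms) auto

lemma bd_entry:
  assumes sq: "\<forall>M\<in>set Ms. dim_col M = dim_row M"
    and s: "s < length Ms" and t: "t < length Ms"
    and r: "r < dim_row (Ms ! s)" and r': "r' < dim_row (Ms ! t)"
  shows "block_diag Ms $$ (off (map dim_row Ms) s + r, off (map dim_row Ms) t + r') =
         (if s = t then Ms ! s $$ (r, r') else 0)"
  using assms
proof (induction Ms arbitrary: s t)
  case Nil then show ?case by simp
next
  case (Cons A As)
  have sqA: "dim_col A = dim_row A" and sqAs: "\<forall>M\<in>set As. dim_col M = dim_row M" using Cons.prems by auto
  have colAs: "sum_list (map dim_col As) = sum_list (map dim_row As)"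
    using sqAs by (induction As) auto
  show ?case
  proof (cases s)
    case 0
    show ?thesis
    proof (cases t)
      case 0 with \<open>s = 0\<close> Cons.prems sqA show ?thesis by simp
    next
      case (Suc b)
      have b: "b < length As" "r' < dim_row (As ! b)" using Cons.prems Suc by auto
      have bound: "off (map dim_row As) b + r' < sum_list (map dim_row As)"
        using off_mono_bound[of b "map dim_row As" r'] b by simp
      show ?thesis using \<open>s = 0\<close> Suc Cons.prems sqA colAs bound by simp
    qed
  next
    case (Suc a)
    have a: "a < length As" "r < dim_row (As ! a)" using Cons.prems Suc by auto
    have bound: "off (map dim_row As) a + r < sum_list (map dim_row As)"
      using off_mono_bound[of a "map dim_row As" r] a by simp
    show ?thesis
    proof (cases t)
      case 0 with Suc Cons.prems sqA colAs bound show ?thesis by simp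
    next
      case (Suc b)
      have b: "b < length As" "r' < dim_row (As ! b)" using Cons.prems Suc by auto
      have bound': "off (map dim_row As) b + r' < sum_list (map dim_row As)"
        using off_mono_bound[of b "map dim_row As" r'] b by simp
      have IH: "block_diag As $$ (off (map dim_row As) a + r, off (map dim_row As) b + r') =
         (if a = b then As ! a $$ (r, r') else 0)"
        by (rule Cons.IH[OF sqAs a(1) b(1) a(2) b(2)])
      show ?thesis using \<open>s = Suc a\<close> Suc sqA colAs bound bound' IH by simp
    qed
  qed
qed


lemma mult_zero_vec[simp]:
  "M \<in> carrier_mat b a \<Longrightarrow> M *\<^sub>v 0\<^sub>v a = (0\<^sub>v b :: 'a :: semiring_0 vec)"
  by (intro eq_vecI) (auto simp: mult_mat_vec_def)

lemma smult_zero_vec'[simp]: "c \<cdot>\<^sub>v 0\<^sub>v n = (0\<^sub>v n :: 'a :: mult_zero vec)"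
  by (intro eq_vecI) auto

lemma kernel_exists:
  fixes A :: "'a :: field mat"
  assumes A: "A \<in> carrier_mat m k" and mk: "m < k"
  shows "\<exists>v. v \<in> carrier_vec k \<and> v \<noteq> 0\<^sub>v k \<and> A *\<^sub>v v = 0\<^sub>v m"
proof -
  define c where "c = (\<lambda>i. if i < m then row A i else 0\<^sub>v k)"
  define A' where "A' = mat\<^sub>r k k (\<lambda>i. if i = k - 1 then 0\<^sub>v k else c i)"
  have cc: "c \<in> {0..<k} \<rightarrow> carrier_vec k" using A unfolding c_def by auto
  have "det A' = 0" unfolding A'_def by (rule det_row_0) (use mk cc in auto)
  moreover have A'c: "A' \<in> carrier_mat k k" unfolding A'_def by simp
  ultimately obtain v where v: "v \<in> carrier_vec k" "v \<noteq> 0\<^sub>v k" "A' *\<^sub>v v = 0\<^sub>v k"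
    using det_0_iff_vec_prod_zero_field[OF A'c] by auto
  have "A *\<^sub>v v = 0\<^sub>v m"
  proof (rule eq_vecI)
    show "dim_vec (A *\<^sub>v v) = dim_vec (0\<^sub>v m)" using A by simp
    fix i assume "i < dim_vec (0\<^sub>v m)"
    then have i: "i < m" by simp
    have "(A' *\<^sub>v v) $ i = 0" using v(3) i mk by simp
    moreover have "(A' *\<^sub>v v) $ i = row A i \<bullet> v"
      using i mk A unfolding A'_def c_def by (simp add: row_mat_of_row_fun)
    ultimately show "(A *\<^sub>v v) $ i = 0\<^sub>v m $ i" using i A by simp
  qed
  with v show ?thesis by auto
qed

lemma mat_eq_zero_if_kernel_all:
  fixes M :: "'a :: field mat"
  assumes M: "M \<in> carrier_mat b a" and all: "\<And>v. v \<in> carrier_vec a \<Longrightarrow> M *\<^sub>v v = 0\<^sub>v b"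
  shows "M = 0\<^sub>m b a"
proof (rule eq_matI)
  fix i j assume i: "i < dim_row (0\<^sub>m b a)" and j: "j < dim_col (0\<^sub>m b a)"
  have "M *\<^sub>v unit_vec a j = col M j" using M j by (intro eq_vecI) (auto simp: mult_mat_vec_def)
  then have "col M j = 0\<^sub>v b" using all[of "unit_vec a j"] by simp
  then have "col M j $ i = 0" using i by simp
  then show "M $$ (i, j) = 0\<^sub>m b a $$ (i, j)" using i j M by simp
qed (use M in auto)

lemma invertible_if_kernel_trivial:
  fixes M :: "'a :: field mat"
  assumes M: "M \<in> carrier_mat n n" and ker: "\<And>v. v \<in> carrier_vec n \<Longrightarrow> M *\<^sub>v v = 0\<^sub>v n \<Longrightarrow> v = 0\<^sub>v n"
  shows "invertible_mat M"
proof -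
  have "det M \<noteq> 0" using det_0_iff_vec_prod_zero_field[OF M] ker by auto
  from det_non_zero_imp_unit[OF M this, of "()"]
  obtain B where B: "B \<in> carrier_mat n n" "B * M = 1\<^sub>m n" "M * B = 1\<^sub>m n"
    unfolding Units_def ring_mat_def by auto
  show ?thesis unfolding invertible_mat_def inverts_mat_def using M B by auto
qed

lemma irrep_facts:
  assumes "is_irrep G H \<rho>"
  shows "is_mat_rep G H (rep_dim G \<rho>) \<rho>" "0 < rep_dim G \<rho>"
    "\<And>W. is_invariant_subspace H (rep_dim G \<rho>) \<rho> W \<Longrightarrow> W = {0\<^sub>v (rep_dim G \<rho>)} \<or> W = carrier_vec (rep_dim G \<rho>)"
  using assms unfolding is_irrep_def Let_def by auto

lemma kernel_invariant:
  assumes rho: "is_mat_rep G H a \<rho>" and sig: "is_mat_rep G H b \<sigma>"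
    and M: "M \<in> carrier_mat b a" and int: "\<And>h. h \<in> H \<Longrightarrow> \<sigma> h * M = M * \<rho> h"
  shows "is_invariant_subspace H a \<rho> {v \<in> carrier_vec a. M *\<^sub>v v = 0\<^sub>v b}"
  unfolding is_invariant_subspace_def
proof (intro conjI ballI allI)
  fix h v assume h: "h \<in> H" and v: "v \<in> {v \<in> carrier_vec a. M *\<^sub>v v = 0\<^sub>v b}"
  have rh: "\<rho> h \<in> carrier_mat a a" and sh: "\<sigma> h \<in> carrier_mat b b"
    using rho sig h unfolding is_mat_rep_def by auto
  have "M *\<^sub>v (\<rho> h *\<^sub>v v) = (M * \<rho> h) *\<^sub>v v" using M rh v by (simp add: assoc_mult_mat_vec)
  also have "\<dots> = (\<sigma> h * M) *\<^sub>v v" using int[OF h] by simp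
  also have "\<dots> = \<sigma> h *\<^sub>v (M *\<^sub>v v)" using M sh v by (simp add: assoc_mult_mat_vec)
  also have "\<dots> = 0\<^sub>v b" using v sh by simp
  finally show "\<rho> h *\<^sub>v v \<in> {v \<in> carrier_vec a. M *\<^sub>v v = 0\<^sub>v b}" using rh v by simp
next
  fix v w assume v: "v \<in> {v \<in> carrier_vec a. M *\<^sub>v v = 0\<^sub>v b}" and w: "w \<in> {v \<in> carrier_vec a. M *\<^sub>v v = 0\<^sub>v b}"
  then show "v + w \<in> {v \<in> carrier_vec a. M *\<^sub>v v = 0\<^sub>v b}" using M by (simp add: mult_add_distrib_mat_vec)
next
  fix c :: complex and v assume v: "v \<in> {v \<in> carrier_vec a. M *\<^sub>v v = 0\<^sub>v b}"
  then show "c \<cdot>\<^sub>v v \<in> {v \<in> carrier_vec a. M *\<^sub>v v = 0\<^sub>v b}" using M by (simp add: mult_mat_vec)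
qed (use M in auto)

lemma image_invariant:
  assumes rho: "is_mat_rep G H a \<rho>" and sig: "is_mat_rep G H b \<sigma>"
    and M: "M \<in> carrier_mat b a" and int: "\<And>h. h \<in> H \<Longrightarrow> \<sigma> h * M = M * \<rho> h"
  shows "is_invariant_subspace H b \<sigma> {M *\<^sub>v v | v. v \<in> carrier_vec a}"
  unfolding is_invariant_subspace_def
proof (intro conjI ballI allI)
  fix h w assume h: "h \<in> H" and w: "w \<in> {M *\<^sub>v v | v. v \<in> carrier_vec a}"
  then obtain v where v: "v \<in> carrier_vec a" "w = M *\<^sub>v v" by auto
  have rh: "\<rho> h \<in> carrier_mat a a" and sh: "\<sigma> h \<in> carrier_mat b b"
    using rho sig h unfolding is_mat_rep_def by auto
  have "\<sigma> h *\<^sub>v w = (\<sigma> h * M) *\<^sub>v v" using M sh v by (simp add: assoc_mult_mat_vec)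
  also have "\<dots> = (M * \<rho> h) *\<^sub>v v" using int[OF h] by simp
  also have "\<dots> = M *\<^sub>v (\<rho> h *\<^sub>v v)" using M rh v by (simp add: assoc_mult_mat_vec)
  finally show "\<sigma> h *\<^sub>v w \<in> {M *\<^sub>v v | v. v \<in> carrier_vec a}" using rh v by auto
next
  fix v w assume "v \<in> {M *\<^sub>v v | v. v \<in> carrier_vec a}" "w \<in> {M *\<^sub>v v | v. v \<in> carrier_vec a}"
  then obtain x y where "x \<in> carrier_vec a" "y \<in> carrier_vec a" "v = M *\<^sub>v x" "w = M *\<^sub>v y" by auto
  then show "v + w \<in> {M *\<^sub>v v | v. v \<in> carrier_vec a}" using M
    by (intro CollectI exI[of _ "x + y"]) (simp add: mult_add_distrib_mat_vec)
next
  fix c :: complex and v assume "v \<in> {M *\<^sub>v v | v. v \<in> carrier_vec a}"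
  then obtain x where "x \<in> carrier_vec a" "v = M *\<^sub>v x" by auto
  then show "c \<cdot>\<^sub>v v \<in> {M *\<^sub>v v | v. v \<in> carrier_vec a}" using M
    by (intro CollectI exI[of _ "c \<cdot>\<^sub>v x"]) (simp add: mult_mat_vec)
next
  show "0\<^sub>v b \<in> {M *\<^sub>v v | v. v \<in> carrier_vec a}" using M
    by (intro CollectI exI[of _ "0\<^sub>v a"]) simp
qed (use M in auto)


lemma schur_equiv:
  assumes rho: "is_irrep G H \<rho>" and sig: "is_irrep G H \<sigma>"
    and M: "M \<in> carrier_mat (rep_dim G \<sigma>) (rep_dim G \<rho>)"
    and int: "\<And>h. h \<in> H \<Longrightarrow> \<sigma> h * M = M * \<rho> h"
    and nz: "M \<noteq> 0\<^sub>m (rep_dim G \<sigma>) (rep_dim G \<rho>)"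
  shows "equiv_reps G H \<rho> \<sigma>"
proof -
  define a where "a = rep_dim G \<rho>"
  define b where "b = rep_dim G \<sigma>"
  note rf = irrep_facts[OF rho, folded a_def] and sf = irrep_facts[OF sig, folded b_def]
  note M = M[folded a_def b_def] and nz = nz[folded a_def b_def]
  have K: "is_invariant_subspace H a \<rho> {v \<in> carrier_vec a. M *\<^sub>v v = 0\<^sub>v b}"
    by (rule kernel_invariant[OF rf(1) sf(1) M int])
  have I: "is_invariant_subspace H b \<sigma> {M *\<^sub>v v | v. v \<in> carrier_vec a}"
    by (rule image_invariant[OF rf(1) sf(1) M int])
  have ker: "\<And>v. v \<in> carrier_vec a \<Longrightarrow> M *\<^sub>v v = 0\<^sub>v b \<Longrightarrow> v = 0\<^sub>v a"
  proof -
    fix v :: "complex vec" assume v: "v \<in> carrier_vec a" "M *\<^sub>v v = 0\<^sub>v b"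
    from rf(3)[OF K] show "v = 0\<^sub>v a"
    proof
      assume "{v \<in> carrier_vec a. M *\<^sub>v v = 0\<^sub>v b} = {0\<^sub>v a}" then show ?thesis using v by auto
    next
      assume "{v \<in> carrier_vec a. M *\<^sub>v v = 0\<^sub>v b} = carrier_vec a"
      then have "M = 0\<^sub>m b a" by (intro mat_eq_zero_if_kernel_all[OF M]) auto
      with nz show ?thesis by simp
    qed
  qed
  have surj: "\<And>w. w \<in> carrier_vec b \<Longrightarrow> \<exists>v \<in> carrier_vec a. M *\<^sub>v v = w"
  proof -
    fix w :: "complex vec" assume w: "w \<in> carrier_vec b"
    from sf(3)[OF I] show "\<exists>v \<in> carrier_vec a. M *\<^sub>v v = w"
    proof
      assume "{M *\<^sub>v v | v. v \<in> carrier_vec a} = carrier_vec b"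
      then have "w \<in> {M *\<^sub>v v | v. v \<in> carrier_vec a}" using w by simp
      then show ?thesis by blast
    next
      assume "{M *\<^sub>v v | v. v \<in> carrier_vec a} = {0\<^sub>v b}"
      then have "M = 0\<^sub>m b a" by (intro mat_eq_zero_if_kernel_all[OF M]) auto
      with nz show ?thesis by simp
    qed
  qed
  have ab: "a = b"
  proof (rule ccontr)
    assume "a \<noteq> b"
    then consider "b < a" | "a < b" by linarith
    then show False
    proof cases
      case 1
      from kernel_exists[OF M 1] obtain v where "v \<in> carrier_vec a" "v \<noteq> 0\<^sub>v a" "M *\<^sub>v v = 0\<^sub>v b" by auto
      with ker show False by auto
    next
      case 2
      have "\<forall>j. \<exists>u. j < b \<longrightarrow> u \<in> carrier_vec a \<and> M *\<^sub>v u = unit_vec b j"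
        using surj by (metis unit_vec_carrier)
      then obtain u where u: "\<And>j. j < b \<Longrightarrow> u j \<in> carrier_vec a \<and> M *\<^sub>v u j = unit_vec b j"
        by metis
      define U where "U = mat a b (\<lambda>(i, j). u j $ i)"
      have U: "U \<in> carrier_mat a b" unfolding U_def by simp
      have MU: "M * U = 1\<^sub>m b"
      proof (rule eq_matI)
        fix i j assume i: "i < dim_row (1\<^sub>m b)" and j: "j < dim_col (1\<^sub>m b)"
        have colU: "col U j = u j" using u[of j] j U unfolding U_def by (intro eq_vecI) auto
        have "(M * U) $$ (i, j) = (M *\<^sub>v col U j) $ i" using i j M U by simp
        also have "\<dots> = unit_vec b j $ i" using colU u[of j] j by simp
        finally show "(M * U) $$ (i, j) = 1\<^sub>m b $$ (i, j)" using i j by simp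
      qed (use M U in auto)
      from kernel_exists[OF U 2] obtain c where c: "c \<in> carrier_vec b" "c \<noteq> 0\<^sub>v b" "U *\<^sub>v c = 0\<^sub>v a" by auto
      have "c = (M * U) *\<^sub>v c" using MU c by simp
      also have "\<dots> = M *\<^sub>v (U *\<^sub>v c)" using M U c by (simp add: assoc_mult_mat_vec)
      also have "\<dots> = 0\<^sub>v b" using c M by simp
      finally show False using c by simp
    qed
  qed
  have inv: "invertible_mat M"
    by (rule invertible_if_kernel_trivial) (use M ab ker in auto)
  show ?thesis unfolding equiv_reps_def
    using ab M inv int unfolding a_def b_def by auto
qed

lemma smult_one_mult_vec:
  assumes v: "v \<in> carrier_vec d"
  shows "(c \<cdot>\<^sub>m 1\<^sub>m d) *\<^sub>v v = c \<cdot>\<^sub>v (v :: 'a :: comm_ring_1 vec)"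
proof (rule eq_vecI)
  fix i assume "i < dim_vec (c \<cdot>\<^sub>v v)"
  then have i: "i < d" using v by simp
  have "((c \<cdot>\<^sub>m 1\<^sub>m d) *\<^sub>v v) $ i = (\<Sum>ia = 0..<d. c * (if i = ia then 1 else 0) * v $ ia)"
    using i v by (simp add: mult_mat_vec_def scalar_prod_def row_def)
  also have "\<dots> = (\<Sum>ia = 0..<d. if i = ia then c * v $ ia else 0)"
    by (rule sum.cong) auto
  also have "\<dots> = c * v $ i" using i by simp
  finally show "((c \<cdot>\<^sub>m 1\<^sub>m d) *\<^sub>v v) $ i = (c \<cdot>\<^sub>v v) $ i" using i v by simp
qed (use v in auto)

lemma schur_scalar:
  assumes rho: "is_irrep G H \<rho>"
    and M: "M \<in> carrier_mat (rep_dim G \<rho>) (rep_dim G \<rho>)"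
    and int: "\<And>h. h \<in> H \<Longrightarrow> \<rho> h * M = M * \<rho> h"
  shows "\<exists>c. M = c \<cdot>\<^sub>m 1\<^sub>m (rep_dim G \<rho>)"
proof -
  define d where "d = rep_dim G \<rho>"
  note rf = irrep_facts[OF rho, folded d_def] and M = M[folded d_def]
  obtain c where "c \<in> spectrum M" using spectrum_non_empty[OF M rf(2)] by auto
  then obtain v where v: "v \<in> carrier_vec d" "v \<noteq> 0\<^sub>v d" "M *\<^sub>v v = c \<cdot>\<^sub>v v"
    using M unfolding spectrum_def eigenvalue_def eigenvector_def by auto
  define N where "N = M - c \<cdot>\<^sub>m 1\<^sub>m d"
  have N: "N \<in> carrier_mat d d" unfolding N_def by (rule minus_carrier_mat) simp
  have intN: "\<rho> h * N = N * \<rho> h" if h: "h \<in> H" for h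
  proof -
    have rh: "\<rho> h \<in> carrier_mat d d" using rf(1) h unfolding is_mat_rep_def by auto
    have "\<rho> h * N = \<rho> h * M - \<rho> h * (c \<cdot>\<^sub>m 1\<^sub>m d)" unfolding N_def using rh M
      by (simp add: mult_minus_distrib_mat)
    also have "\<dots> = M * \<rho> h - (c \<cdot>\<^sub>m 1\<^sub>m d) * \<rho> h"
    proof -
      have s1: "\<rho> h * (c \<cdot>\<^sub>m 1\<^sub>m d) = c \<cdot>\<^sub>m \<rho> h"
        using mult_smult_distrib[OF rh one_carrier_mat[of d]] rh by simp
      have s2: "(c \<cdot>\<^sub>m 1\<^sub>m d) * \<rho> h = c \<cdot>\<^sub>m \<rho> h"
        using mult_smult_assoc_mat[OF one_carrier_mat[of d] rh] rh by simp
      show ?thesis using int[OF h] s1 s2 by simp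
    qed
    also have "\<dots> = N * \<rho> h" unfolding N_def using rh M
      by (subst minus_mult_distrib_mat[of _ d d]) auto
    finally show ?thesis .
  qed
  have K: "is_invariant_subspace H d \<rho> {v \<in> carrier_vec d. N *\<^sub>v v = 0\<^sub>v d}"
    by (rule kernel_invariant[OF rf(1) rf(1) N intN])
  have cv: "(c \<cdot>\<^sub>m 1\<^sub>m d) *\<^sub>v v = c \<cdot>\<^sub>v v"
    using v(1) by (rule smult_one_mult_vec)
  have Nv: "N *\<^sub>v v = 0\<^sub>v d" unfolding N_def using M v cv
    by (simp add: minus_mult_distrib_mat_vec)
  from rf(3)[OF K] have "{v \<in> carrier_vec d. N *\<^sub>v v = 0\<^sub>v d} = carrier_vec d"
    using v Nv by auto
  then have "N = 0\<^sub>m d d" by (intro mat_eq_zero_if_kernel_all[OF N]) auto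
  then have "M = c \<cdot>\<^sub>m 1\<^sub>m d"
  proof -
    assume N0: "N = 0\<^sub>m d d"
    show ?thesis
    proof (rule eq_matI)
      fix i j assume ij: "i < dim_row (c \<cdot>\<^sub>m 1\<^sub>m d)" "j < dim_col (c \<cdot>\<^sub>m 1\<^sub>m d)"
      have "N $$ (i, j) = 0" using N0 ij by simp
      then show "M $$ (i, j) = (c \<cdot>\<^sub>m 1\<^sub>m d) $$ (i, j)" unfolding N_def using ij M by auto
    qed (use M in auto)
  qed
  then show ?thesis unfolding d_def by auto
qed


context group begin

definition piece :: "'a set \<Rightarrow> ('a \<Rightarrow> complex mat) set \<Rightarrow> 'a set \<Rightarrow> ('a \<Rightarrow> complex) list \<Rightarrow> ('a \<Rightarrow> complex mat) list \<Rightarrow> bool" where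
  "piece H R Y L \<rho>s \<longleftrightarrow> subgroup H G \<and> complete_irreps G H R \<and> is_basis_of Y L \<and>
     (\<forall>h\<in>H. act_mat G L h = block_diag (map (\<lambda>\<rho>. \<rho> h) \<rho>s)) \<and> set \<rho>s \<subseteq> R \<and> (\<forall>h\<in>H. stable Y h)"

lemma pieceD:
  assumes "piece H R Y L \<rho>s"
  shows "subgroup H G" "complete_irreps G H R" "is_basis_of Y L"
    "\<And>h. h \<in> H \<Longrightarrow> act_mat G L h = block_diag (map (\<lambda>\<rho>. \<rho> h) \<rho>s)"
    "set \<rho>s \<subseteq> R" "\<And>h. h \<in> H \<Longrightarrow> stable Y h"
  using assms unfolding piece_def by simp_all

lemma piece_irrep: "piece H R Y L \<rho>s \<Longrightarrow> t < length \<rho>s \<Longrightarrow> is_irrep G H (\<rho>s ! t)"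
proof -
  assume P: "piece H R Y L \<rho>s" and t: "t < length \<rho>s"
  have "\<rho>s ! t \<in> R" using pieceD(5)[OF P] nth_mem[OF t] by (rule subsetD)
  moreover have "\<forall>\<rho>\<in>R. is_irrep G H \<rho>" using pieceD(2)[OF P] unfolding complete_irreps_def by simp
  ultimately show ?thesis by simp
qed

lemma piece_rep_carrier:
  assumes "piece H R Y L \<rho>s" "t < length \<rho>s" "h \<in> H"
  shows "(\<rho>s ! t) h \<in> carrier_mat (rep_dim G (\<rho>s ! t)) (rep_dim G (\<rho>s ! t))"
  using irrep_facts(1)[OF piece_irrep[OF assms(1,2)]] assms(3) unfolding is_mat_rep_def by auto

lemma piece_rep_dims:
  assumes "piece H R Y L \<rho>s" "t < length \<rho>s" "h \<in> H"
  shows "dim_row ((\<rho>s ! t) h) = rep_dim G (\<rho>s ! t)" "dim_col ((\<rho>s ! t) h) = rep_dim G (\<rho>s ! t)"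
  using piece_rep_carrier[OF assms] by auto

lemma piece_dims:
  assumes P: "piece H R Y L \<rho>s" and h: "h \<in> H"
  shows "map dim_row (map (\<lambda>\<rho>. \<rho> h) \<rho>s) = map (rep_dim G) \<rho>s"
    "\<forall>M\<in>set (map (\<lambda>\<rho>. \<rho> h) \<rho>s). dim_col M = dim_row M"
proof -
  note c = piece_rep_dims[OF P _ h]
  show "map dim_row (map (\<lambda>\<rho>. \<rho> h) \<rho>s) = map (rep_dim G) \<rho>s"
    by (rule nth_equalityI) (use c in auto)
  show "\<forall>M\<in>set (map (\<lambda>\<rho>. \<rho> h) \<rho>s). dim_col M = dim_row M"
    using c by (auto simp: in_set_conv_nth)
qed

lemma piece_length:
  assumes P: "piece H R Y L \<rho>s"
  shows "length L = sum_list (map (rep_dim G) \<rho>s)"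
proof -
  have H: "subgroup H G" by (rule pieceD(1)[OF P])
  have one: "\<one> \<in> H" by (rule subgroup.one_closed[OF H])
  have "dim_row (act_mat G L \<one>) = length L" unfolding act_mat_def by simp
  also have "act_mat G L \<one> = block_diag (map (\<lambda>\<rho>. \<rho> \<one>) \<rho>s)" by (rule pieceD(4)[OF P one])
  finally have "length L = sum_list (map dim_row (map (\<lambda>\<rho>. \<rho> \<one>) \<rho>s))" by simp
  then show ?thesis by (simp only: piece_dims(1)[OF P one])
qed

lemma piece_entry:
  assumes P: "piece H R Y L \<rho>s" and h: "h \<in> H"
    and s: "s < length \<rho>s" and t: "t < length \<rho>s"
    and r: "r < rep_dim G (\<rho>s ! s)" and r': "r' < rep_dim G (\<rho>s ! t)"
  shows "act_mat G L h $$ (off (map (rep_dim G) \<rho>s) s + r, off (map (rep_dim G) \<rho>s) t + r') =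
         (if s = t then (\<rho>s ! s) h $$ (r, r') else 0)"
proof -
  have A: "act_mat G L h = block_diag (map (\<lambda>\<rho>. \<rho> h) \<rho>s)" by (rule pieceD(4)[OF P h])
  note d = piece_dims[OF P h]
  show ?thesis unfolding A d(1)[symmetric]
    by (subst bd_entry[OF d(2)]) (use s t r r' piece_rep_dims[OF P _ h] in auto)
qed

lemma piece_sum_collapse:
  assumes P: "piece H R Y L \<rho>s" and h: "h \<in> H" and t: "t < length \<rho>s" and k: "k < rep_dim G (\<rho>s ! t)"
  shows "(\<Sum>l<length L. act_mat G L h $$ (l, off (map (rep_dim G) \<rho>s) t + k) * g l) =
         (\<Sum>i<rep_dim G (\<rho>s ! t). (\<rho>s ! t) h $$ (i, k) * g (off (map (rep_dim G) \<rho>s) t + i))"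
proof -
  let ?ds = "map (rep_dim G) \<rho>s"
  have "(\<Sum>l<length L. act_mat G L h $$ (l, off ?ds t + k) * g l) =
        (\<Sum>s<length ?ds. \<Sum>r<?ds ! s. act_mat G L h $$ (off ?ds s + r, off ?ds t + k) * g (off ?ds s + r))"
    unfolding piece_length[OF P] by (rule sum_split)
  also have "\<dots> = (\<Sum>s<length \<rho>s. if s = t then (\<Sum>r<rep_dim G (\<rho>s ! t). (\<rho>s ! t) h $$ (r, k) * g (off ?ds t + r)) else 0)"
    by (rule sum.cong) (auto simp: piece_entry[OF P h _ t _ k])
  also have "\<dots> = (\<Sum>i<rep_dim G (\<rho>s ! t). (\<rho>s ! t) h $$ (i, k) * g (off ?ds t + i))"
    using t by simp
  finally show ?thesis .
qed

lemma piece_sum_collapse_row: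
  assumes P: "piece H R Y L \<rho>s" and h: "h \<in> H" and s: "s < length \<rho>s" and r: "r < rep_dim G (\<rho>s ! s)"
  shows "(\<Sum>l<length L. act_mat G L h $$ (off (map (rep_dim G) \<rho>s) s + r, l) * g l) =
         (\<Sum>i<rep_dim G (\<rho>s ! s). (\<rho>s ! s) h $$ (r, i) * g (off (map (rep_dim G) \<rho>s) s + i))"
proof -
  let ?ds = "map (rep_dim G) \<rho>s"
  have "(\<Sum>l<length L. act_mat G L h $$ (off ?ds s + r, l) * g l) =
        (\<Sum>t<length ?ds. \<Sum>r'<?ds ! t. act_mat G L h $$ (off ?ds s + r, off ?ds t + r') * g (off ?ds t + r'))"
    unfolding piece_length[OF P] by (rule sum_split)
  also have "\<dots> = (\<Sum>t<length \<rho>s. if s = t then (\<Sum>r'<rep_dim G (\<rho>s ! s). (\<rho>s ! s) h $$ (r, r') * g (off ?ds s + r')) else 0)"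
    by (rule sum.cong) (auto simp: piece_entry[OF P h s _ r])
  also have "\<dots> = (\<Sum>i<rep_dim G (\<rho>s ! s). (\<rho>s ! s) h $$ (r, i) * g (off ?ds s + i))"
    using s by simp
  finally show ?thesis .
qed

lemma block_act:
  assumes P: "piece H R Y L \<rho>s" and h: "h \<in> H" and t: "t < length \<rho>s" and k: "k < rep_dim G (\<rho>s ! t)"
  shows "reg_act G h (L ! (off (map (rep_dim G) \<rho>s) t + k)) =
         (\<lambda>x. \<Sum>i<rep_dim G (\<rho>s ! t). (\<rho>s ! t) h $$ (i, k) * (L ! (off (map (rep_dim G) \<rho>s) t + i)) x)"
proof -
  let ?ds = "map (rep_dim G) \<rho>s"
  have kL: "off ?ds t + k < length L" unfolding piece_length[OF P]
    by (rule off_mono_bound) (use t k in auto)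
  show ?thesis
    unfolding act_expand[OF pieceD(3)[OF P] pieceD(6)[OF P h] kL]
    by (rule ext) (rule piece_sum_collapse[OF P h t k])
qed

lemma piece_space_sub: "Y' \<subseteq> Y \<Longrightarrow> fun_space Y' \<subseteq> fun_space Y"
  unfolding fun_space_def by auto

definition blk :: "('a \<Rightarrow> complex) list \<Rightarrow> ('a \<Rightarrow> complex mat) list \<Rightarrow> ('a \<Rightarrow> complex) list \<Rightarrow> ('a \<Rightarrow> complex mat) list \<Rightarrow> nat \<Rightarrow> nat \<Rightarrow> complex mat" where
  "blk L \<rho>s L' \<rho>s' s t = mat (rep_dim G (\<rho>s ! s)) (rep_dim G (\<rho>s' ! t))
     (\<lambda>(r, r'). coords L (L' ! (off (map (rep_dim G) \<rho>s') t + r')) $ (off (map (rep_dim G) \<rho>s) s + r))"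

lemma intertwine:
  assumes P: "piece H R Y L \<rho>s" and P': "piece H R Y' L' \<rho>s'" and sub: "Y' \<subseteq> Y"
    and h: "h \<in> H" and s: "s < length \<rho>s" and t: "t < length \<rho>s'"
  shows "(\<rho>s ! s) h * blk L \<rho>s L' \<rho>s' s t = blk L \<rho>s L' \<rho>s' s t * (\<rho>s' ! t) h"
proof -
  let ?ds = "map (rep_dim G) \<rho>s" and ?ds' = "map (rep_dim G) \<rho>s'"
  let ?d = "rep_dim G (\<rho>s ! s)" and ?d' = "rep_dim G (\<rho>s' ! t)"
  note B = pieceD(3)[OF P] and B' = pieceD(3)[OF P']
  note cs = piece_rep_dims[OF P s h] and ct = piece_rep_dims[OF P' t h]
  show ?thesis
  proof (rule eq_matI)
    fix r r' assume r: "r < dim_row (blk L \<rho>s L' \<rho>s' s t * (\<rho>s' ! t) h)"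
      and r': "r' < dim_col (blk L \<rho>s L' \<rho>s' s t * (\<rho>s' ! t) h)"
    then have r: "r < ?d" and r': "r' < ?d'" using ct unfolding blk_def by auto
    define k where "k = off ?ds' t + r'"
    have kL: "k < length L'" unfolding k_def piece_length[OF P']
      by (rule off_mono_bound) (use t r' in auto)
    have f: "L' ! k \<in> fun_space Y" using piece_space_sub[OF sub] basis_in_space[OF B' kL] by auto
    have i: "off ?ds s + r < length L" unfolding piece_length[OF P]
      by (rule off_mono_bound) (use s r in auto)
    have c: "coords L (L' ! k) \<in> carrier_vec (length L)" by (rule basis_coords(1)[OF B f])
    have "coords L (reg_act G h (L' ! k)) $ (off ?ds s + r) = (act_mat G L h *\<^sub>v coords L (L' ! k)) $ (off ?ds s + r)"
      by (simp add: coords_act[OF B pieceD(6)[OF P h] f])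
    also have "\<dots> = (\<Sum>l<length L. act_mat G L h $$ (off ?ds s + r, l) * coords L (L' ! k) $ l)"
      using i c by (simp add: mult_mat_vec_def scalar_prod_def act_mat_def atLeast0LessThan)
    also have "\<dots> = (\<Sum>i<?d. (\<rho>s ! s) h $$ (r, i) * coords L (L' ! k) $ (off ?ds s + i))"
      by (rule piece_sum_collapse_row[OF P h s r])
    also have "\<dots> = ((\<rho>s ! s) h * blk L \<rho>s L' \<rho>s' s t) $$ (r, r')"
      using r r' cs unfolding blk_def k_def by (simp add: scalar_prod_def atLeast0LessThan)
    finally have e1: "coords L (reg_act G h (L' ! k)) $ (off ?ds s + r) = ((\<rho>s ! s) h * blk L \<rho>s L' \<rho>s' s t) $$ (r, r')" .
    have "reg_act G h (L' ! k) = (\<lambda>x. \<Sum>i<?d'. (\<rho>s' ! t) h $$ (i, r') * (L' ! (off ?ds' t + i)) x)"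
      unfolding k_def by (rule block_act[OF P' h t r'])
    then have "coords L (reg_act G h (L' ! k)) = vec (length L) (\<lambda>j. \<Sum>i\<in>{..<?d'}. (\<rho>s' ! t) h $$ (i, r') * coords L (L' ! (off ?ds' t + i)) $ j)"
    proof (simp only:, intro coords_sum[OF B])
      fix i assume "i \<in> {..<?d'}"
      then have "off ?ds' t + i < length L'" unfolding piece_length[OF P']
        by (intro off_mono_bound) (use t in auto)
      then show "L' ! (off ?ds' t + i) \<in> fun_space Y" using piece_space_sub[OF sub] basis_in_space[OF B'] by auto
    qed simp
    then have "coords L (reg_act G h (L' ! k)) $ (off ?ds s + r) = (\<Sum>i<?d'. (\<rho>s' ! t) h $$ (i, r') * coords L (L' ! (off ?ds' t + i)) $ (off ?ds s + r))"
      using i by simp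
    also have "\<dots> = (blk L \<rho>s L' \<rho>s' s t * (\<rho>s' ! t) h) $$ (r, r')"
      using r r' ct unfolding blk_def by (simp add: scalar_prod_def atLeast0LessThan mult.commute)
    finally have e2: "coords L (reg_act G h (L' ! k)) $ (off ?ds s + r) = (blk L \<rho>s L' \<rho>s' s t * (\<rho>s' ! t) h) $$ (r, r')" .
    from e1 e2 show "((\<rho>s ! s) h * blk L \<rho>s L' \<rho>s' s t) $$ (r, r') = (blk L \<rho>s L' \<rho>s' s t * (\<rho>s' ! t) h) $$ (r, r')"
      by simp
  qed (use cs ct in \<open>auto simp: blk_def\<close>)
qed

lemma blk_carrier: "blk L \<rho>s L' \<rho>s' s t \<in> carrier_mat (rep_dim G (\<rho>s ! s)) (rep_dim G (\<rho>s' ! t))"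
  unfolding blk_def by simp

lemma piece_in_R: "piece H R Y L \<rho>s \<Longrightarrow> t < length \<rho>s \<Longrightarrow> \<rho>s ! t \<in> R"
  using pieceD(5) nth_mem by blast

lemma blk_structure:
  assumes P: "piece H R Y L \<rho>s" and P': "piece H R Y' L' \<rho>s'" and sub: "Y' \<subseteq> Y"
    and s: "s < length \<rho>s" and t: "t < length \<rho>s'"
  shows "\<exists>c. blk L \<rho>s L' \<rho>s' s t = (if \<rho>s ! s = \<rho>s' ! t then c \<cdot>\<^sub>m 1\<^sub>m (rep_dim G (\<rho>s ! s))
           else 0\<^sub>m (rep_dim G (\<rho>s ! s)) (rep_dim G (\<rho>s' ! t)))"
proof (cases "\<rho>s ! s = \<rho>s' ! t")
  case True
  have "\<exists>c. blk L \<rho>s L' \<rho>s' s t = c \<cdot>\<^sub>m 1\<^sub>m (rep_dim G (\<rho>s ! s))"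
  proof (rule schur_scalar[OF piece_irrep[OF P s]])
    show "blk L \<rho>s L' \<rho>s' s t \<in> carrier_mat (rep_dim G (\<rho>s ! s)) (rep_dim G (\<rho>s ! s))"
      using blk_carrier[of L \<rho>s L' \<rho>s' s t] True by simp
    fix h assume h: "h \<in> H"
    show "(\<rho>s ! s) h * blk L \<rho>s L' \<rho>s' s t = blk L \<rho>s L' \<rho>s' s t * (\<rho>s ! s) h"
      using intertwine[OF P P' sub h s t] True by simp
  qed
  then show ?thesis using True by simp
next
  case False
  have "blk L \<rho>s L' \<rho>s' s t = 0\<^sub>m (rep_dim G (\<rho>s ! s)) (rep_dim G (\<rho>s' ! t))"
  proof (rule ccontr)
    assume nz: "blk L \<rho>s L' \<rho>s' s t \<noteq> 0\<^sub>m (rep_dim G (\<rho>s ! s)) (rep_dim G (\<rho>s' ! t))"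
    have "equiv_reps G H (\<rho>s' ! t) (\<rho>s ! s)"
      by (rule schur_equiv[OF piece_irrep[OF P' t] piece_irrep[OF P s] blk_carrier _ nz])
        (rule intertwine[OF P P' sub _ s t])
    moreover have "\<forall>\<rho>\<in>R. \<forall>\<sigma>\<in>R. \<rho> \<noteq> \<sigma> \<longrightarrow> \<not> equiv_reps G H \<rho> \<sigma>"
      using pieceD(2)[OF P] unfolding complete_irreps_def by simp
    ultimately show False using piece_in_R[OF P s] piece_in_R[OF P' t] False by metis
  qed
  then show ?thesis using False by simp
qed

lemma coord_nonzero_block:
  assumes P: "piece H R Y L \<rho>s" and P': "piece H R Y' L' \<rho>s'" and sub: "Y' \<subseteq> Y"
    and s: "s < length \<rho>s" and t: "t < length \<rho>s'"
    and r: "r < rep_dim G (\<rho>s ! s)" and r': "r' < rep_dim G (\<rho>s' ! t)"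
    and nz: "coords L (L' ! (off (map (rep_dim G) \<rho>s') t + r')) $ (off (map (rep_dim G) \<rho>s) s + r) \<noteq> 0"
  shows "\<rho>s ! s = \<rho>s' ! t \<and> r = r'"
proof -
  obtain c where c: "blk L \<rho>s L' \<rho>s' s t = (if \<rho>s ! s = \<rho>s' ! t then c \<cdot>\<^sub>m 1\<^sub>m (rep_dim G (\<rho>s ! s))
           else 0\<^sub>m (rep_dim G (\<rho>s ! s)) (rep_dim G (\<rho>s' ! t)))"
    using blk_structure[OF P P' sub s t] by blast
  have e: "blk L \<rho>s L' \<rho>s' s t $$ (r, r') \<noteq> 0" using nz r r' unfolding blk_def by simp
  show ?thesis
  proof (cases "\<rho>s ! s = \<rho>s' ! t")
    case True
    then show ?thesis using e c r r' by (auto split: if_splits)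
  next
    case False
    then show ?thesis using e c r r' by simp
  qed
qed

lemma pair_nnz:
  assumes P: "piece H R Y L \<rho>s" and P': "piece H R Y' L' \<rho>s'" and sub: "Y' \<subseteq> Y"
  shows "(\<Sum>i<length L. \<Sum>k<length L'. if coords L (L' ! k) $ i \<noteq> 0 then 1 else (0::nat)) \<le>
         (\<Sum>s<length \<rho>s. \<Sum>t<length \<rho>s'. if \<rho>s ! s = \<rho>s' ! t then rep_dim G (\<rho>s ! s) else 0)"
proof -
  let ?ds = "map (rep_dim G) \<rho>s" and ?ds' = "map (rep_dim G) \<rho>s'"
  let ?N = "\<lambda>i k. if coords L (L' ! k) $ i \<noteq> 0 then 1 else (0::nat)"
  have "(\<Sum>i<length L. \<Sum>k<length L'. ?N i k) = (\<Sum>s<length ?ds. \<Sum>r<?ds ! s. \<Sum>k<length L'. ?N (off ?ds s + r) k)"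
    unfolding piece_length[OF P] by (rule sum_split)
  also have "\<dots> = (\<Sum>s<length \<rho>s. \<Sum>r<rep_dim G (\<rho>s ! s). \<Sum>t<length \<rho>s'. \<Sum>r'<rep_dim G (\<rho>s' ! t). ?N (off ?ds s + r) (off ?ds' t + r'))"
    unfolding piece_length[OF P'] by (subst sum_split) simp
  also have "\<dots> = (\<Sum>s<length \<rho>s. \<Sum>t<length \<rho>s'. \<Sum>r<rep_dim G (\<rho>s ! s). \<Sum>r'<rep_dim G (\<rho>s' ! t). ?N (off ?ds s + r) (off ?ds' t + r'))"
    by (rule sum.cong[OF refl]) (rule sum.swap)
  also have "\<dots> \<le> (\<Sum>s<length \<rho>s. \<Sum>t<length \<rho>s'. if \<rho>s ! s = \<rho>s' ! t then rep_dim G (\<rho>s ! s) else 0)"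
  proof (intro sum_mono)
    fix s t assume s: "s \<in> {..<length \<rho>s}" and t: "t \<in> {..<length \<rho>s'}"
    have le: "?N (off ?ds s + r) (off ?ds' t + r') \<le> (if \<rho>s ! s = \<rho>s' ! t \<and> r = r' then 1 else 0)"
      if r: "r < rep_dim G (\<rho>s ! s)" and r': "r' < rep_dim G (\<rho>s' ! t)" for r r'
      using coord_nonzero_block[OF P P' sub _ _ r r'] s t by auto
    have "(\<Sum>r<rep_dim G (\<rho>s ! s). \<Sum>r'<rep_dim G (\<rho>s' ! t). ?N (off ?ds s + r) (off ?ds' t + r'))
       \<le> (\<Sum>r<rep_dim G (\<rho>s ! s). \<Sum>r'<rep_dim G (\<rho>s' ! t). if \<rho>s ! s = \<rho>s' ! t \<and> r = r' then 1 else 0)"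
      by (intro sum_mono le) auto
    also have "\<dots> = (if \<rho>s ! s = \<rho>s' ! t then rep_dim G (\<rho>s ! s) else 0)"
    proof (cases "\<rho>s ! s = \<rho>s' ! t")
      case True
      have "(\<Sum>r<rep_dim G (\<rho>s ! s). \<Sum>r'<rep_dim G (\<rho>s' ! t). if \<rho>s ! s = \<rho>s' ! t \<and> r = r' then 1 else (0::nat))
          = (\<Sum>r<rep_dim G (\<rho>s ! s). 1)"
        using True by (intro sum.cong) auto
      then show ?thesis using True by simp
    qed simp
    finally show "(\<Sum>r<rep_dim G (\<rho>s ! s). \<Sum>r'<rep_dim G (\<rho>s' ! t). ?N (off ?ds s + r) (off ?ds' t + r'))
       \<le> (if \<rho>s ! s = \<rho>s' ! t then rep_dim G (\<rho>s ! s) else 0)" .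
  qed
  finally show ?thesis .
qed

end


context group begin

lemma reg_act_inv_eval:
  assumes "x \<in> carrier G" "h \<in> carrier G"
  shows "reg_act G (inv h) f x = f (h \<otimes> x)"
  using assms unfolding reg_act_def by simp

lemma multiplicity:
  assumes P: "piece H R Y L \<rho>s" and \<rho>R: "\<rho> \<in> R" and fin: "finite X0" and X0c: "X0 \<subseteq> carrier G"
    and cov: "\<And>y. y \<in> Y \<Longrightarrow> \<exists>h\<in>H. \<exists>x\<in>X0. y = h \<otimes> x"
  shows "card {s. s < length \<rho>s \<and> \<rho>s ! s = \<rho>} \<le> card X0 * rep_dim G \<rho>"
proof (rule ccontr)
  define S where "S = {s. s < length \<rho>s \<and> \<rho>s ! s = \<rho>}"
  define m where "m = card S"
  define sl where "sl = sorted_list_of_set S"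
  obtain xs where xs: "set xs = X0" "distinct xs" using finite_distinct_list[OF fin] by blast
  define q where "q = length xs"
  have q: "q = card X0" unfolding q_def using xs distinct_card by metis
  define d where "d = rep_dim G \<rho>"
  define ds where "ds = map (rep_dim G) \<rho>s"
  define po where "po = (\<lambda>u. off ds (sl ! u))"
  have H: "subgroup H G" by (rule pieceD(1)[OF P])
  have B: "is_basis_of Y L" by (rule pieceD(3)[OF P])
  have irr: "is_irrep G H \<rho>" using pieceD(2)[OF P] \<rho>R unfolding complete_irreps_def by simp
  have d0: "0 < d" unfolding d_def by (rule irrep_facts(2)[OF irr])
  have finS: "finite S" unfolding S_def by simp
  have sl: "length sl = m" "distinct sl" "set sl = S" unfolding sl_def m_def using finS by auto
  have slu: "sl ! u < length \<rho>s" "\<rho>s ! (sl ! u) = \<rho>" if "u < m" for u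
  proof -
    have "sl ! u \<in> S" using sl that nth_mem by metis
    then show "sl ! u < length \<rho>s" "\<rho>s ! (sl ! u) = \<rho>" unfolding S_def by auto
  qed
  have ou: "po u + i < length L" if "u < m" "i < d" for u i
    unfolding po_def piece_length[OF P] ds_def
    by (rule off_mono_bound) (use slu[OF that(1)] that(2) d_def in auto)
  assume "\<not> card S \<le> card X0 * rep_dim G \<rho>"
  then have mq: "q * d < m" unfolding m_def q d_def S_def by simp
  define W where "W = mat (q * d) m (\<lambda>(a, u). (L ! (po u + a mod d)) (xs ! (a div d)))"
  have W: "W \<in> carrier_mat (q * d) m" unfolding W_def by simp
  obtain c where c: "c \<in> carrier_vec m" "c \<noteq> 0\<^sub>v m" "W *\<^sub>v c = 0\<^sub>v (q * d)"
    using kernel_exists[OF W mq] by blast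
  have zero: "(\<Sum>u<m. c $ u * (L ! (po u + i)) (xs ! l)) = 0" if l: "l < q" and i: "i < d" for l i
  proof -
    have a: "l * d + i < q * d"
    proof -
      have "l * d + i < l * d + d" using i by simp
      also have "\<dots> = (l + 1) * d" by simp
      also have "\<dots> \<le> q * d" using l by (intro mult_right_mono) auto
      finally show ?thesis .
    qed
    have dv: "(l * d + i) div d = l" "(l * d + i) mod d = i" using i d0 by auto
    have "(W *\<^sub>v c) $ (l * d + i) = 0" using c(3) a by simp
    moreover have "(W *\<^sub>v c) $ (l * d + i) = (\<Sum>u<m. c $ u * (L ! (po u + i)) (xs ! l))"
      using a c(1) dv unfolding W_def
      by (simp add: mult_mat_vec_def scalar_prod_def atLeast0LessThan mult.commute)
    ultimately show ?thesis by simp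
  qed
  define F where "F = (\<lambda>k y. \<Sum>u<m. c $ u * (L ! (po u + k)) y)"
  have Fz: "F k y = 0" if k: "k < d" for k y
  proof (cases "y \<in> Y")
    case False
    have "(L ! (po u + k)) y = 0" if u: "u < m" for u
      using basis_in_space[OF B ou[OF u k]] False unfolding fun_space_def by auto
    then show ?thesis unfolding F_def by simp
  next
    case True
    from cov[OF True] obtain h x where h: "h \<in> H" and x: "x \<in> X0" and y: "y = h \<otimes> x" by blast
    obtain l where l: "l < q" "xs ! l = x" using x xs unfolding q_def by (metis in_set_conv_nth)
    have hc: "h \<in> carrier G" by (rule subgroup.mem_carrier[OF H h])
    have ih: "inv h \<in> H" by (rule subgroup.m_inv_closed[OF H h])
    have xc: "x \<in> carrier G" using x X0c by auto
    have ev: "(L ! (po u + k)) y = (\<Sum>i<d. \<rho> (inv h) $$ (i, k) * (L ! (po u + i)) x)" if u: "u < m" for u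
    proof -
      have "(L ! (po u + k)) y = reg_act G (inv h) (L ! (po u + k)) x"
        using reg_act_inv_eval[OF xc hc] y by simp
      also have "reg_act G (inv h) (L ! (po u + k)) = (\<lambda>x. \<Sum>i<rep_dim G (\<rho>s ! (sl ! u)). (\<rho>s ! (sl ! u)) (inv h) $$ (i, k) * (L ! (off (map (rep_dim G) \<rho>s) (sl ! u) + i)) x)"
        unfolding po_def ds_def by (rule block_act[OF P ih slu(1)[OF u]]) (use slu(2)[OF u] k d_def in auto)
      finally show ?thesis using slu(2)[OF u] unfolding po_def ds_def d_def by simp
    qed
    have "F k y = (\<Sum>u<m. c $ u * (\<Sum>i<d. \<rho> (inv h) $$ (i, k) * (L ! (po u + i)) x))"
      unfolding F_def by (rule sum.cong) (auto simp: ev)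
    also have "\<dots> = (\<Sum>i<d. \<rho> (inv h) $$ (i, k) * (\<Sum>u<m. c $ u * (L ! (po u + i)) x))"
      by (simp add: sum_distrib_left sum_distrib_right mult.assoc mult.left_commute) (rule sum.swap)
    also have "\<dots> = 0" using zero[OF l(1)] l(2) by simp
    finally show ?thesis .
  qed
  define e where "e = vec (length L) (\<lambda>j. \<Sum>u<m. if j = po u then c $ u else 0)"
  have "lincomb e L = (\<lambda>y. F 0 y)"
  proof (rule ext)
    fix y
    have "lincomb e L y = (\<Sum>j<length L. \<Sum>u<m. if j = po u then c $ u * (L ! j) y else 0)"
      unfolding lincomb_def e_def by (simp add: sum_distrib_right if_distrib[of "\<lambda>a. a * _"] cong: if_cong)
    also have "\<dots> = (\<Sum>u<m. \<Sum>j<length L. if j = po u then c $ u * (L ! j) y else 0)" by (rule sum.swap)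
    also have "\<dots> = (\<Sum>u<m. c $ u * (L ! (po u)) y)"
      by (rule sum.cong) (use ou[OF _ d0] in auto)
    finally show "lincomb e L y = F 0 y" unfolding F_def by simp
  qed
  then have l0: "lincomb e L = (\<lambda>y. 0)" using Fz[OF d0] by auto
  have "coords L (\<lambda>y. 0) = e" by (rule coords_unique[OF B]) (use l0 e_def in auto)
  moreover have "coords L (\<lambda>y. 0) = 0\<^sub>v (length L)"
    by (rule coords_unique[OF B]) (auto simp: lincomb_def)
  ultimately have e0: "e = 0\<^sub>v (length L)" by simp
  have "c $ u = 0" if u: "u < m" for u
  proof -
    have "e $ (po u) = (\<Sum>u'<m. if po u = po u' then c $ u' else 0)" unfolding e_def using ou[OF u d0] by simp
    also have "\<dots> = (\<Sum>u'<m. if u' = u then c $ u' else 0)"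
    proof (rule sum.cong[OF refl])
      fix u' assume u': "u' \<in> {..<m}"
      have "po u = po u' \<longleftrightarrow> u' = u"
      proof
        assume "po u = po u'"
        then have "sl ! u = sl ! u'"
          using off_inj[of "sl ! u" ds 0 "sl ! u'" 0] slu[OF u] slu[of u'] u' d0 unfolding po_def ds_def d_def
          by auto
        then show "u' = u" using sl u u' by (simp add: nth_eq_iff_index_eq)
      qed simp
      then show "(if po u = po u' then c $ u' else 0) = (if u' = u then c $ u' else 0)" by simp
    qed
    also have "\<dots> = c $ u" using u by simp
    finally show ?thesis using e0 ou[OF u d0] by simp
  qed
  then have "c = 0\<^sub>v m" using c(1) by (intro eq_vecI) auto
  with c(2) show False by simp
qed

end


context group begin

lemma rcos_repr: "Y \<in> rcosets H \<Longrightarrow> \<exists>x\<in>carrier G. Y = H #> x"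
  unfolding RCOSETS_def by blast

lemma rcosets_mem: "x \<in> carrier G \<Longrightarrow> H #> x \<in> rcosets H"
  unfolding RCOSETS_def by blast

lemma rcos_sub_mono:
  assumes "H \<subseteq> K" shows "H #> x \<subseteq> K #> x"
  using assms unfolding r_coset_def by auto

lemma coset_nested:
  assumes H: "subgroup H G" and K: "subgroup K G" and HK: "H \<subseteq> K"
    and Y': "Y' \<in> rcosets H" and Y: "Y \<in> rcosets K" and ne: "Y' \<inter> Y \<noteq> {}"
  shows "Y' \<subseteq> Y"
proof -
  obtain x where x: "x \<in> carrier G" "Y' = H #> x" using rcos_repr[OF Y'] by blast
  obtain y where y: "y \<in> carrier G" "Y = K #> y" using rcos_repr[OF Y] by blast
  obtain z where z: "z \<in> Y'" "z \<in> Y" using ne by blast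
  have "Y' = H #> z" using repr_independence[of z H x] z x H by simp
  moreover have "Y = K #> z" using repr_independence[of z K y] z y K by simp
  ultimately show ?thesis using rcos_sub_mono[OF HK] by simp
qed

lemma rcosets_sub_carrier: "subgroup H G \<Longrightarrow> Y \<in> rcosets H \<Longrightarrow> Y \<subseteq> carrier G"
  using rcosets_part_G by blast

lemma count_inner:
  assumes fin: "finite (carrier G)" and H: "subgroup H G" and K: "subgroup K G" and HK: "H \<subseteq> K"
    and Y: "Y \<in> rcosets K"
  shows "card {Y' \<in> rcosets H. Y' \<subseteq> Y} * card H = card K"
proof -
  let ?C = "{Y' \<in> rcosets H. Y' \<subseteq> Y}"
  have U: "\<Union>?C = Y"
  proof
    show "\<Union>?C \<subseteq> Y" by blast
    show "Y \<subseteq> \<Union>?C"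
    proof
      fix y assume yY: "y \<in> Y"
      have yc: "y \<in> carrier G" using rcosets_sub_carrier[OF K Y] yY by blast
      have m: "H #> y \<in> rcosets H" by (rule rcosets_mem[OF yc])
      have yy: "y \<in> H #> y" by (rule rcos_self[OF yc H])
      have "H #> y \<subseteq> Y" by (rule coset_nested[OF H K HK m Y]) (use yy yY in blast)
      then show "y \<in> \<Union>?C" using m yy by blast
    qed
  qed
  have finC: "finite ?C"
  proof (rule finite_subset)
    show "?C \<subseteq> Pow (carrier G)" using rcosets_sub_carrier[OF H] by blast
  qed (use fin in simp)
  have cardc: "\<forall>c\<in>?C. card c = card H"
    using card_rcosets_equal[of _ H] subgroup.subset[OF H] by auto
  have disj: "\<forall>c1\<in>?C. \<forall>c2\<in>?C. c1 \<noteq> c2 \<longrightarrow> c1 \<inter> c2 = {}"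
    using rcos_disjoint[OF H] unfolding pairwise_def disjnt_def by blast
  have "card H * card ?C = card (\<Union>?C)"
  proof (rule card_partition)
    show "finite ?C" by (rule finC)
    show "finite (\<Union>?C)" unfolding U using rcosets_sub_carrier[OF K Y] fin finite_subset by blast
    show "\<And>c. c \<in> ?C \<Longrightarrow> card c = card H" using cardc by blast
    show "\<And>c1 c2. c1 \<in> ?C \<Longrightarrow> c2 \<in> ?C \<Longrightarrow> c1 \<noteq> c2 \<Longrightarrow> c1 \<inter> c2 = {}" using disj by blast
  qed
  also have "\<dots> = card K" unfolding U using card_rcosets_equal[OF Y subgroup.subset[OF K]] by simp
  finally show ?thesis by (simp add: mult.commute)
qed

lemma card_cosets:
  assumes fin: "finite (carrier G)" and K: "subgroup K G"
  shows "card (rcosets K) * card K = card (carrier G)"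
  using lagrange[OF K] unfolding Coset.order_def .

lemma subgroup_card_pos:
  assumes fin: "finite (carrier G)" and K: "subgroup K G"
  shows "0 < card K"
proof -
  have "finite K" using subgroup.subset[OF K] fin finite_subset by blast
  moreover have "K \<noteq> {}" using subgroup.one_closed[OF K] by blast
  ultimately show ?thesis by auto
qed

end


lemma decomp:
  assumes "i < sum_list ns"
  shows "\<exists>t r. t < length ns \<and> r < ns ! t \<and> i = off ns t + r"
  using assms
proof (induction ns arbitrary: i)
  case Nil then show ?case by simp
next
  case (Cons n ns)
  show ?case
  proof (cases "i < n")
    case True then show ?thesis by (intro exI[of _ 0] exI[of _ i]) simp
  next
    case False
    then have "i - n < sum_list ns" using Cons.prems by simp
    from Cons.IH[OF this] obtain t r where "t < length ns" "r < ns ! t" "i - n = off ns t + r" by blast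
    then show ?thesis using False by (intro exI[of _ "Suc t"] exI[of _ r]) simp
  qed
qed

definition restr :: "'a set \<Rightarrow> ('a \<Rightarrow> complex) \<Rightarrow> ('a \<Rightarrow> complex)" where
  "restr Y f = (\<lambda>x. if x \<in> Y then f x else 0)"

lemma restr_space: "restr Y f \<in> fun_space Y" unfolding restr_def fun_space_def by auto

lemma restr_id: "f \<in> fun_space Y \<Longrightarrow> restr Y f = f" unfolding restr_def fun_space_def by auto

lemma restr_disj:
  assumes "f \<in> fun_space Y'" "Y' \<inter> Y = {}" shows "restr Y f = (\<lambda>x. 0)"
proof (rule ext)
  fix x show "restr Y f x = 0" using assms unfolding restr_def fun_space_def by auto
qed

lemma lincomb_concat:
  assumes "c \<in> carrier_vec (length (concat Ls))"
  shows "lincomb c (concat Ls) x = (\<Sum>p<length Ls. \<Sum>r<length (Ls ! p). c $ (off (map length Ls) p + r) * (Ls ! p ! r) x)"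
proof -
  have "lincomb c (concat Ls) x = (\<Sum>i<sum_list (map length Ls). c $ i * (concat Ls ! i) x)"
    unfolding lincomb_def by (simp add: length_concat)
  also have "\<dots> = (\<Sum>p<length (map length Ls). \<Sum>r<map length Ls ! p. c $ (off (map length Ls) p + r) * (concat Ls ! (off (map length Ls) p + r)) x)"
    by (rule sum_split)
  also have "\<dots> = (\<Sum>p<length Ls. \<Sum>r<length (Ls ! p). c $ (off (map length Ls) p + r) * (Ls ! p ! r) x)"
    by (intro sum.cong) (auto simp: concat_nth_off)
  finally show ?thesis .
qed

locale partition_bases =
  fixes Ys :: "'a set list" and Ls :: "('a \<Rightarrow> complex) list list" and Z :: "'a set"
  assumes len: "length Ls = length Ys"
    and bases: "\<And>p. p < length Ys \<Longrightarrow> is_basis_of (Ys ! p) (Ls ! p)"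
    and disj: "\<And>p p'. p < length Ys \<Longrightarrow> p' < length Ys \<Longrightarrow> p \<noteq> p' \<Longrightarrow> Ys ! p \<inter> Ys ! p' = {}"
    and union: "\<Union>(set Ys) = Z"
begin

abbreviation "ns \<equiv> map length Ls"

lemma coef:
  assumes c: "c \<in> carrier_vec (length (concat Ls))" and p: "p < length Ys"
  shows "restr (Ys ! p) (lincomb c (concat Ls)) = lincomb (vec (length (Ls ! p)) (\<lambda>r. c $ (off ns p + r))) (Ls ! p)"
proof (rule ext)
  fix x
  show "restr (Ys ! p) (lincomb c (concat Ls)) x = lincomb (vec (length (Ls ! p)) (\<lambda>r. c $ (off ns p + r))) (Ls ! p) x"
  proof (cases "x \<in> Ys ! p")
    case True
    have "lincomb c (concat Ls) x = (\<Sum>p'<length Ls. \<Sum>r<length (Ls ! p'). c $ (off ns p' + r) * (Ls ! p' ! r) x)"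
      by (rule lincomb_concat[OF c])
    also have "\<dots> = (\<Sum>p'<length Ls. if p' = p then (\<Sum>r<length (Ls ! p). c $ (off ns p + r) * (Ls ! p ! r) x) else 0)"
    proof (rule sum.cong[OF refl])
      fix p' assume p': "p' \<in> {..<length Ls}"
      show "(\<Sum>r<length (Ls ! p'). c $ (off ns p' + r) * (Ls ! p' ! r) x) =
            (if p' = p then (\<Sum>r<length (Ls ! p). c $ (off ns p + r) * (Ls ! p ! r) x) else 0)"
      proof (cases "p' = p")
        case False
        have "x \<notin> Ys ! p'" using disj[of p p'] p p' len False True by auto
        then have "(Ls ! p' ! r) x = 0" if "r < length (Ls ! p')" for r
          using basis_in_space[OF bases[of p'] that] p' len unfolding fun_space_def by auto
        then show ?thesis using False by simp
      qed simp
    qed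
    also have "\<dots> = (\<Sum>r<length (Ls ! p). c $ (off ns p + r) * (Ls ! p ! r) x)" using p len by simp
    finally show ?thesis using True unfolding restr_def lincomb_def by simp
  next
    case False
    have "(Ls ! p ! r) x = 0" if "r < length (Ls ! p)" for r
      using basis_in_space[OF bases[OF p] that] False unfolding fun_space_def by auto
    then show ?thesis using False unfolding restr_def lincomb_def by simp
  qed
qed

lemma coef_coords:
  assumes c: "c \<in> carrier_vec (length (concat Ls))" and p: "p < length Ys" and r: "r < length (Ls ! p)"
  shows "c $ (off ns p + r) = coords (Ls ! p) (restr (Ys ! p) (lincomb c (concat Ls))) $ r"
proof -
  have "coords (Ls ! p) (restr (Ys ! p) (lincomb c (concat Ls))) = vec (length (Ls ! p)) (\<lambda>r. c $ (off ns p + r))"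
    by (rule coords_unique[OF bases[OF p]]) (auto simp: coef[OF c p])
  then show ?thesis using r by simp
qed

lemma concat_is_basis: "is_basis_of Z (concat Ls)"
  unfolding is_basis_of_def
proof (intro conjI ballI)
  show "set (concat Ls) \<subseteq> fun_space Z"
  proof
    fix b assume "b \<in> set (concat Ls)"
    then obtain L where L: "L \<in> set Ls" "b \<in> set L" by auto
    then obtain p where p: "p < length Ls" "L = Ls ! p" by (auto simp: in_set_conv_nth)
    obtain r where r: "r < length (Ls ! p)" "b = Ls ! p ! r" using L(2) p(2) by (auto simp: in_set_conv_nth)
    have "b \<in> fun_space (Ys ! p)" using basis_in_space[OF bases r(1)] p len r by auto
    moreover have "Ys ! p \<subseteq> Z" using union p len nth_mem by fastforce
    ultimately show "b \<in> fun_space Z" unfolding fun_space_def by auto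
  qed
next
  fix f assume f: "f \<in> fun_space Z"
  define cs where "cs = map (\<lambda>p. list_of_vec (coords (Ls ! p) (restr (Ys ! p) f))) [0..<length Ys]"
  have lp: "dim_vec (coords (Ls ! p) (restr (Ys ! p) f)) = length (Ls ! p)" if p: "p < length Ys" for p
    using basis_coords(1)[OF bases[OF p] restr_space] by simp
  have lcs: "map length cs = ns"
    unfolding cs_def by (rule nth_equalityI) (simp_all add: lp len)
  define c where "c = vec_of_list (concat cs)"
  have cl: "length (concat cs) = length (concat Ls)" by (simp add: length_concat lcs)
  have c: "c \<in> carrier_vec (length (concat Ls))" unfolding c_def carrier_vec_def using cl by simp
  have cidx: "c $ (off ns p + r) = coords (Ls ! p) (restr (Ys ! p) f) $ r" if p: "p < length Ys" and r: "r < length (Ls ! p)" for p r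
  proof -
    have "c $ (off ns p + r) = concat cs ! (off (map length cs) p + r)" unfolding c_def lcs
      by (simp add: vec_of_list_index)
    also have "\<dots> = cs ! p ! r" by (rule concat_nth_off) (use p r lp[OF p] len in \<open>auto simp: cs_def\<close>)
    also have "\<dots> = coords (Ls ! p) (restr (Ys ! p) f) $ r" unfolding cs_def using p r lp[OF p] by simp
    finally show ?thesis .
  qed
  have fl: "f = lincomb c (concat Ls)"
  proof (rule ext)
    fix x
    have "lincomb c (concat Ls) x = (\<Sum>p<length Ls. \<Sum>r<length (Ls ! p). c $ (off ns p + r) * (Ls ! p ! r) x)"
      by (rule lincomb_concat[OF c])
    also have "\<dots> = (\<Sum>p<length Ys. restr (Ys ! p) f x)"
    proof (rule sum.cong)
      fix p assume p: "p \<in> {..<length Ys}"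
      have pp: "p < length Ys" using p by simp
      have "(\<Sum>r<length (Ls ! p). c $ (off ns p + r) * (Ls ! p ! r) x) =
            (\<Sum>r<length (Ls ! p). coords (Ls ! p) (restr (Ys ! p) f) $ r * (Ls ! p ! r) x)"
        by (rule sum.cong) (simp_all add: cidx[OF pp])
      also have "\<dots> = lincomb (coords (Ls ! p) (restr (Ys ! p) f)) (Ls ! p) x" unfolding lincomb_def ..
      also have "\<dots> = restr (Ys ! p) f x"
        using fun_cong[where x=x, OF basis_coords(2)[OF bases[OF pp] restr_space]] by (rule sym)
      finally show "(\<Sum>r<length (Ls ! p). c $ (off ns p + r) * (Ls ! p ! r) x) = restr (Ys ! p) f x" .
    qed (simp add: len)
    also have "\<dots> = f x"
    proof (cases "x \<in> Z")
      case True
      then obtain p where p: "p < length Ys" "x \<in> Ys ! p" using union by (auto simp: in_set_conv_nth)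
      have "(\<Sum>p'<length Ys. restr (Ys ! p') f x) = (\<Sum>p'<length Ys. if p' = p then f x else 0)"
      proof (rule sum.cong[OF refl])
        fix p' assume p': "p' \<in> {..<length Ys}"
        show "restr (Ys ! p') f x = (if p' = p then f x else 0)"
          using disj[of p p'] p p' unfolding restr_def by auto
      qed
      then show ?thesis using p by simp
    next
      case False
      then have "x \<notin> Ys ! p'" if "p' < length Ys" for p' using union that nth_mem by blast
      then show ?thesis using False f unfolding restr_def fun_space_def by auto
    qed
    finally show "f x = lincomb c (concat Ls) x" by simp
  qed
  show "\<exists>!c. c \<in> carrier_vec (length (concat Ls)) \<and> f = lincomb c (concat Ls)"
  proof (rule ex1I[of _ c])
    show "c \<in> carrier_vec (length (concat Ls)) \<and> f = lincomb c (concat Ls)" using c fl by simp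
    fix c' assume c': "c' \<in> carrier_vec (length (concat Ls)) \<and> f = lincomb c' (concat Ls)"
    show "c' = c"
    proof (rule eq_vecI)
      show "dim_vec c' = dim_vec c" using c c' by simp
      fix i assume "i < dim_vec c"
      then have "i < sum_list ns" using c by (simp add: length_concat)
      then obtain p r where pr: "p < length ns" "r < ns ! p" "i = off ns p + r" using decomp by blast
      have p: "p < length Ys" and r: "r < length (Ls ! p)" using pr len by auto
      have "c' $ i = coords (Ls ! p) (restr (Ys ! p) (lincomb c' (concat Ls))) $ r"
        unfolding pr(3) by (rule coef_coords[OF _ p r]) (use c' in simp)
      also have "lincomb c' (concat Ls) = lincomb c (concat Ls)" using c' fl by simp
      also have "coords (Ls ! p) (restr (Ys ! p) (lincomb c (concat Ls))) $ r = c $ i"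
        unfolding pr(3) by (rule coef_coords[OF c p r, symmetric])
      finally show "c' $ i = c $ i" .
    qed
  qed
qed

lemma concat_coords:
  assumes f: "f \<in> fun_space Z" and p: "p < length Ys" and r: "r < length (Ls ! p)"
  shows "coords (concat Ls) f $ (off ns p + r) = coords (Ls ! p) (restr (Ys ! p) f) $ r"
proof -
  have e: "lincomb (coords (concat Ls) f) (concat Ls) = f"
    using basis_coords(2)[OF concat_is_basis f] by (rule sym)
  show ?thesis using coef_coords[OF basis_coords(1)[OF concat_is_basis f] p r] unfolding e .
qed

end


context group begin

lemma embed_in_pieces:
  assumes P: "piece H R H L \<rho>s" and \<rho>R: "\<rho> \<in> R"
  shows "\<rho> \<in> set \<rho>s"
proof -
  have Hs: "subgroup H G" by (rule pieceD(1)[OF P])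
  have B: "is_basis_of H L" by (rule pieceD(3)[OF P])
  have irr: "is_irrep G H \<rho>" using pieceD(2)[OF P] \<rho>R unfolding complete_irreps_def by simp
  define d where "d = rep_dim G \<rho>"
  note rf = irrep_facts[OF irr, folded d_def]
  have rc: "\<rho> h \<in> carrier_mat d d" if "h \<in> H" for h using rf(1) that unfolding is_mat_rep_def by auto
  have rmul: "\<rho> (h1 \<otimes> h2) = \<rho> h1 * \<rho> h2" if "h1 \<in> H" "h2 \<in> H" for h1 h2
    using rf(1) that unfolding is_mat_rep_def by auto
  have r1: "\<rho> \<one> = 1\<^sub>m d" using rf(1) unfolding is_mat_rep_def by auto
  define \<phi> where "\<phi> = (\<lambda>k y. if y \<in> H then \<rho> (inv y) $$ (0, k) else 0)"
  have \<phi>sp: "\<phi> k \<in> fun_space H" for k unfolding \<phi>_def fun_space_def by auto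
  have Hc: "\<And>y. y \<in> H \<Longrightarrow> y \<in> carrier G" using subgroup.mem_carrier[OF Hs] by blast
  have act: "reg_act G h (\<phi> k) = (\<lambda>y. \<Sum>i\<in>{..<d}. \<rho> h $$ (i, k) * \<phi> i y)" if h: "h \<in> H" and k: "k < d" for h k
  proof (rule ext)
    fix y
    have hc: "h \<in> carrier G" by (rule Hc[OF h])
    have ih: "inv h \<in> H" by (rule subgroup.m_inv_closed[OF Hs h])
    show "reg_act G h (\<phi> k) y = (\<Sum>i\<in>{..<d}. \<rho> h $$ (i, k) * \<phi> i y)"
    proof (cases "y \<in> H")
      case True
      have yc: "y \<in> carrier G" by (rule Hc[OF True])
      have iy: "inv y \<in> H" by (rule subgroup.m_inv_closed[OF Hs True])
      have m: "inv h \<otimes> y \<in> H" by (rule subgroup.m_closed[OF Hs ih True])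
      have "inv (inv h \<otimes> y) = inv y \<otimes> h" using hc yc by (simp add: inv_mult_group)
      then have "\<rho> (inv (inv h \<otimes> y)) = \<rho> (inv y) * \<rho> h" using rmul[OF iy h] by simp
      then have "reg_act G h (\<phi> k) y = (\<rho> (inv y) * \<rho> h) $$ (0, k)"
        unfolding reg_act_def \<phi>_def using yc m by simp
      also have "\<dots> = (\<Sum>i<d. \<rho> (inv y) $$ (0, i) * \<rho> h $$ (i, k))"
        using rc[OF iy] rc[OF h] k rf(2) by (simp add: scalar_prod_def atLeast0LessThan)
      also have "\<dots> = (\<Sum>i\<in>{..<d}. \<rho> h $$ (i, k) * \<phi> i y)"
        unfolding \<phi>_def using True by (simp add: mult.commute)
      finally show ?thesis .
    next
      case False
      have "y \<in> carrier G \<Longrightarrow> inv h \<otimes> y \<notin> H"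
      proof
        assume yc: "y \<in> carrier G" and m: "inv h \<otimes> y \<in> H"
        then have "h \<otimes> (inv h \<otimes> y) \<in> H" by (intro subgroup.m_closed[OF Hs h])
        moreover have "h \<otimes> (inv h \<otimes> y) = y" using hc yc by (simp add: m_assoc[symmetric])
        ultimately show False using False by simp
      qed
      then show ?thesis using False unfolding reg_act_def \<phi>_def by auto
    qed
  qed
  define ds where "ds = map (rep_dim G) \<rho>s"
  have nz: "coords L (\<phi> 0) \<noteq> 0\<^sub>v (length L)"
  proof
    assume z: "coords L (\<phi> 0) = 0\<^sub>v (length L)"
    have "\<phi> 0 = lincomb (coords L (\<phi> 0)) L" by (rule basis_coords(2)[OF B \<phi>sp])
    also have "\<dots> = (\<lambda>y. 0)" unfolding z lincomb_def by simp
    finally have "\<phi> 0 \<one> = 0" by simp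
    moreover have "\<phi> 0 \<one> = 1" unfolding \<phi>_def using subgroup.one_closed[OF Hs] r1 rf(2) by simp
    ultimately show False by simp
  qed
  then obtain j where j: "j < length L" "coords L (\<phi> 0) $ j \<noteq> 0"
    using basis_coords(1)[OF B \<phi>sp] by (metis carrier_vecD eq_vecI index_zero_vec(1) index_zero_vec(2))
  obtain s r where sr: "s < length ds" "r < ds ! s" "j = off ds s + r"
    using decomp[of j ds] j(1) piece_length[OF P] unfolding ds_def by auto
  have s: "s < length \<rho>s" and r: "r < rep_dim G (\<rho>s ! s)" using sr unfolding ds_def by auto
  define M where "M = mat (rep_dim G (\<rho>s ! s)) d (\<lambda>(r, k). coords L (\<phi> k) $ (off ds s + r))"
  have M: "M \<in> carrier_mat (rep_dim G (\<rho>s ! s)) d" unfolding M_def by simp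
  have Mnz: "M \<noteq> 0\<^sub>m (rep_dim G (\<rho>s ! s)) d"
  proof
    assume "M = 0\<^sub>m (rep_dim G (\<rho>s ! s)) d"
    then have "M $$ (r, 0) = 0" using r rf(2) by simp
    then show False using j sr r rf(2) unfolding M_def by simp
  qed
  have int: "(\<rho>s ! s) h * M = M * \<rho> h" if h: "h \<in> H" for h
  proof (rule eq_matI)
    fix a k assume a: "a < dim_row (M * \<rho> h)" and k: "k < dim_col (M * \<rho> h)"
    then have a: "a < rep_dim G (\<rho>s ! s)" and k: "k < d" using M rc[OF h] by auto
    have ia: "off ds s + a < length L" unfolding piece_length[OF P] ds_def
      by (rule off_mono_bound) (use s a in auto)
    have "coords L (reg_act G h (\<phi> k)) = act_mat G L h *\<^sub>v coords L (\<phi> k)"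
      by (rule coords_act[OF B pieceD(6)[OF P h] \<phi>sp])
    then have "coords L (reg_act G h (\<phi> k)) $ (off ds s + a) = (\<Sum>l<length L. act_mat G L h $$ (off ds s + a, l) * coords L (\<phi> k) $ l)"
      using ia basis_coords(1)[OF B \<phi>sp[of k]] by (simp add: mult_mat_vec_def scalar_prod_def act_mat_def atLeast0LessThan)
    also have "\<dots> = (\<Sum>i<rep_dim G (\<rho>s ! s). (\<rho>s ! s) h $$ (a, i) * coords L (\<phi> k) $ (off ds s + i))"
      unfolding ds_def by (rule piece_sum_collapse_row[OF P h s a])
    also have "\<dots> = ((\<rho>s ! s) h * M) $$ (a, k)"
      using a k piece_rep_dims[OF P s h] unfolding M_def by (simp add: scalar_prod_def atLeast0LessThan)
    finally have e1: "coords L (reg_act G h (\<phi> k)) $ (off ds s + a) = ((\<rho>s ! s) h * M) $$ (a, k)" .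
    have "coords L (reg_act G h (\<phi> k)) = vec (length L) (\<lambda>jj. \<Sum>i\<in>{..<d}. \<rho> h $$ (i, k) * coords L (\<phi> i) $ jj)"
      unfolding act[OF h k] by (rule coords_sum[OF B]) (auto intro: \<phi>sp)
    then have "coords L (reg_act G h (\<phi> k)) $ (off ds s + a) = (\<Sum>i\<in>{..<d}. \<rho> h $$ (i, k) * coords L (\<phi> i) $ (off ds s + a))"
      using ia by simp
    also have "\<dots> = (M * \<rho> h) $$ (a, k)"
      using a k rc[OF h] unfolding M_def by (simp add: scalar_prod_def atLeast0LessThan mult.commute)
    finally have e2: "coords L (reg_act G h (\<phi> k)) $ (off ds s + a) = (M * \<rho> h) $$ (a, k)" .
    show "((\<rho>s ! s) h * M) $$ (a, k) = (M * \<rho> h) $$ (a, k)" using e1 e2 by simp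
  qed (use M rc[OF h] piece_rep_dims[OF P s h] in auto)
  have "equiv_reps G H \<rho> (\<rho>s ! s)"
    by (rule schur_equiv[OF irr piece_irrep[OF P s] M[unfolded d_def] int Mnz[unfolded d_def]])
  moreover have "\<forall>\<rho>\<in>R. \<forall>\<sigma>\<in>R. \<rho> \<noteq> \<sigma> \<longrightarrow> \<not> equiv_reps G H \<rho> \<sigma>"
    using pieceD(2)[OF P] unfolding complete_irreps_def by simp
  ultimately have "\<rho> = \<rho>s ! s" using \<rho>R piece_in_R[OF P s] by metis
  then show ?thesis using s by simp
qed

end


lemma card_filter_sum: "card {j. j < (n::nat) \<and> P j} = (\<Sum>j<n. if P j then 1 else (0::nat))"
proof -
  have e: "{j. j < n \<and> P j} = {j \<in> {..<n}. P j}" by auto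
  have "card {j \<in> {..<n}. P j} = (\<Sum>j\<in>{j \<in> {..<n}. P j}. 1)" by simp
  also have "\<dots> = (\<Sum>j<n. if P j then 1 else 0)" by (rule sum.inter_filter) simp
  finally show ?thesis unfolding e .
qed

lemma sparse_le:
  fixes C :: "complex mat"
  assumes r0: "0 < dim_row C" and j0: "j0 < dim_col C" "C $$ (0, j0) \<noteq> 0"
  shows "sparse_matvec_ops C + 1 \<le> 2 * (\<Sum>i<dim_row C. \<Sum>j<dim_col C. if C $$ (i, j) \<noteq> 0 then 1 else 0)"
proof -
  define k where "k = (\<lambda>i. card {j. j < dim_col C \<and> C $$ (i, j) \<noteq> 0})"
  have k: "k i = (\<Sum>j<dim_col C. if C $$ (i, j) \<noteq> 0 then 1 else 0)" for i
    unfolding k_def by (rule card_filter_sum)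
  define t where "t = (\<lambda>i. if k i = 0 then 0 else 2 * k i - 1)"
  have sp: "sparse_matvec_ops C = (\<Sum>i<dim_row C. t i)" unfolding sparse_matvec_ops_def t_def k_def Let_def ..
  have k0: "0 < k 0"
  proof -
    have "finite {j. j < dim_col C \<and> C $$ (0, j) \<noteq> 0}" by simp
    moreover have "j0 \<in> {j. j < dim_col C \<and> C $$ (0, j) \<noteq> 0}" using j0 by simp
    ultimately show ?thesis unfolding k_def by (metis card_gt_0_iff empty_iff)
  qed
  obtain m where m: "dim_row C = Suc m" using r0 by (cases "dim_row C") auto
  have "sparse_matvec_ops C + 1 = t 0 + 1 + (\<Sum>i<m. t (Suc i))" unfolding sp m sum.lessThan_Suc_shift by simp
  also have "\<dots> \<le> 2 * k 0 + (\<Sum>i<m. 2 * k (Suc i))"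
    using k0 by (intro add_mono sum_mono) (auto simp: t_def)
  also have "\<dots> = 2 * (\<Sum>i<dim_row C. k i)" unfolding m sum.lessThan_Suc_shift by (simp add: sum_distrib_left)
  finally show ?thesis by (simp add: k)
qed

definition cnt :: "'x list \<Rightarrow> 'x \<Rightarrow> nat" where
  "cnt xs x = card {t. t < length xs \<and> xs ! t = x}"

lemma regroup:
  assumes R: "finite R" and xs: "set xs \<subseteq> R"
  shows "(\<Sum>s<length xs. g (xs ! s)) = (\<Sum>\<rho>\<in>R. cnt xs \<rho> * (g \<rho> :: nat))"
proof -
  have "(\<Sum>s<length xs. g (xs ! s)) = (\<Sum>s<length xs. \<Sum>\<rho>\<in>R. if xs ! s = \<rho> then g \<rho> else 0)"
  proof (rule sum.cong[OF refl])
    fix s assume "s \<in> {..<length xs}"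
    then have "xs ! s \<in> R" using xs nth_mem by blast
    then show "g (xs ! s) = (\<Sum>\<rho>\<in>R. if xs ! s = \<rho> then g \<rho> else 0)" using R by (simp add: sum.delta)
  qed
  also have "\<dots> = (\<Sum>\<rho>\<in>R. \<Sum>s<length xs. if xs ! s = \<rho> then g \<rho> else 0)" by (rule sum.swap)
  also have "\<dots> = (\<Sum>\<rho>\<in>R. cnt xs \<rho> * g \<rho>)"
  proof (rule sum.cong[OF refl])
    fix \<rho>
    have "(\<Sum>s<length xs. if xs ! s = \<rho> then g \<rho> else 0) = (\<Sum>s<length xs. if xs ! s = \<rho> then 1 else 0) * g \<rho>"
      by (simp add: sum_distrib_right if_distrib[of "\<lambda>a. a * _"] cong: if_cong)
    then show "(\<Sum>s<length xs. if xs ! s = \<rho> then g \<rho> else 0) = cnt xs \<rho> * g \<rho>"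
      unfolding cnt_def card_filter_sum by simp
  qed
  finally show ?thesis .
qed

lemma cross_cnt:
  "(\<Sum>t<length ys. if x = ys ! t then c else 0) = cnt ys x * (c :: nat)"
proof -
  have "(\<Sum>t<length ys. if x = ys ! t then c else 0) = (\<Sum>t<length ys. (if ys ! t = x then 1 else 0) * c)"
    by (rule sum.cong) auto
  also have "\<dots> = (\<Sum>t<length ys. if ys ! t = x then 1 else 0) * c" by (rule sum_distrib_right[symmetric])
  finally have "(\<Sum>t<length ys. if x = ys ! t then c else 0) = (\<Sum>t<length ys. if ys ! t = x then 1 else 0) * c" .
  then show ?thesis unfolding cnt_def card_filter_sum by simp
qed


lemma change_mat_coords:
  assumes B: "is_basis_of Z B" and B': "is_basis_of Z B'" and f: "f \<in> fun_space Z"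
  shows "change_mat B B' *\<^sub>v coords B' f = coords B f"
proof -
  define c where "c = coords B' f"
  have c: "c \<in> carrier_vec (length B')" unfolding c_def by (rule basis_coords(1)[OF B' f])
  have fe: "f = (\<lambda>x. \<Sum>k\<in>{..<length B'}. c $ k * (B' ! k) x)"
    using basis_coords(2)[OF B' f] unfolding lincomb_def c_def by simp
  have "coords B f = vec (length B) (\<lambda>i. \<Sum>k\<in>{..<length B'}. c $ k * coords B (B' ! k) $ i)"
    by (subst fe, rule coords_sum[OF B]) (auto intro: basis_in_space[OF B'])
  also have "\<dots> = change_mat B B' *\<^sub>v c"
    using c by (intro eq_vecI) (simp_all add: change_mat_def mult_mat_vec_def scalar_prod_def row_def mult.commute atLeast0LessThan)
  finally show ?thesis unfolding c_def by simp
qed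

lemma change_row_nonzero:
  assumes B: "is_basis_of Z B" and B': "is_basis_of Z B'" and i: "i < length B"
  shows "\<exists>j<length B'. change_mat B B' $$ (i, j) \<noteq> 0"
proof (rule ccontr)
  assume "\<not> (\<exists>j<length B'. change_mat B B' $$ (i, j) \<noteq> 0)"
  then have z: "\<And>j. j < length B' \<Longrightarrow> coords B (B' ! j) $ i = 0" using i unfolding change_mat_def by auto
  have b: "B ! i \<in> fun_space Z" by (rule basis_in_space[OF B i])
  have "coords B (B ! i) = change_mat B B' *\<^sub>v coords B' (B ! i)" by (rule change_mat_coords[OF B B' b, symmetric])
  then have "coords B (B ! i) $ i = (\<Sum>j<length B'. coords B (B' ! j) $ i * coords B' (B ! i) $ j)"
    using i basis_coords(1)[OF B' b]
    by (simp add: change_mat_def mult_mat_vec_def scalar_prod_def row_def atLeast0LessThan)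
  also have "\<dots> = 0" using z by simp
  finally show False using coords_nth[OF B i] i by simp
qed

lemma basis_nonempty:
  assumes B: "is_basis_of Z B" and z: "z \<in> Z"
  shows "0 < length B"
proof (rule ccontr)
  assume "\<not> 0 < length B"
  then have l: "length B = 0" by simp
  define \<delta> where "\<delta> = (\<lambda>x. if x = z then (1::complex) else 0)"
  have "\<delta> \<in> fun_space Z" unfolding \<delta>_def fun_space_def using z by auto
  from basis_coords(2)[OF B this] have "\<delta> = lincomb (coords B \<delta>) B" .
  then have "\<delta> z = 0" using l unfolding lincomb_def by simp
  then show False unfolding \<delta>_def by simp
qed

locale step = group G for G (structure) +
  fixes H K R Ys Ls rss Ys' Ls' rss'
  assumes fin: "finite (carrier G)" and Hs: "subgroup H G" and Ks: "subgroup K G" and HK: "H \<subseteq> K"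
    and Ysd: "distinct Ys" and Yss: "set Ys = rcosets K" and Lsl: "length Ls = length Ys"
    and rssl: "length rss = length Ys" and pc: "\<And>p. p < length Ys \<Longrightarrow> piece H R (Ys ! p) (Ls ! p) (rss ! p)"
    and Ysd': "distinct Ys'" and Yss': "set Ys' = rcosets H" and Lsl': "length Ls' = length Ys'"
    and rssl': "length rss' = length Ys'" and pc': "\<And>p. p < length Ys' \<Longrightarrow> piece H R (Ys' ! p) (Ls' ! p) (rss' ! p)"
begin

lemma pb: "partition_bases Ys Ls (carrier G)"
proof
  show "length Ls = length Ys" by (rule Lsl)
  show "\<And>p. p < length Ys \<Longrightarrow> is_basis_of (Ys ! p) (Ls ! p)" using pc pieceD(3) by blast
  fix p p' assume "p < length Ys" "p' < length Ys" "p \<noteq> p'"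
  then have "Ys ! p \<in> rcosets K" "Ys ! p' \<in> rcosets K" "Ys ! p \<noteq> Ys ! p'"
    using Yss Ysd nth_mem nth_eq_iff_index_eq by blast+
  then show "Ys ! p \<inter> Ys ! p' = {}" using rcos_disjoint[OF Ks] unfolding pairwise_def disjnt_def by blast
next
  show "\<Union>(set Ys) = carrier G" using Yss rcosets_part_G[OF Ks] by simp
qed

lemma pb': "partition_bases Ys' Ls' (carrier G)"
proof
  show "length Ls' = length Ys'" by (rule Lsl')
  show "\<And>p. p < length Ys' \<Longrightarrow> is_basis_of (Ys' ! p) (Ls' ! p)" using pc' pieceD(3) by blast
  fix p p' assume "p < length Ys'" "p' < length Ys'" "p \<noteq> p'"
  then have "Ys' ! p \<in> rcosets H" "Ys' ! p' \<in> rcosets H" "Ys' ! p \<noteq> Ys' ! p'"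
    using Yss' Ysd' nth_mem nth_eq_iff_index_eq by blast+
  then show "Ys' ! p \<inter> Ys' ! p' = {}" using rcos_disjoint[OF Hs] unfolding pairwise_def disjnt_def by blast
next
  show "\<Union>(set Ys') = carrier G" using Yss' rcosets_part_G[OF Hs] by simp
qed

abbreviation "B \<equiv> concat Ls"
abbreviation "B' \<equiv> concat Ls'"

lemma bases: "is_basis_of (carrier G) B" "is_basis_of (carrier G) B'"
  using partition_bases.concat_is_basis[OF pb] partition_bases.concat_is_basis[OF pb'] by auto

lemma finR: "finite R"
proof -
  have "H #> \<one> = H" by (rule coset_mult_one[OF subgroup.subset[OF Hs]])
  then have "H \<in> rcosets H" using rcosets_mem[of \<one> H] by simp
  then obtain p0 where p0: "p0 < length Ys'" "Ys' ! p0 = H" using Yss' by (metis in_set_conv_nth)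
  have P: "piece H R H (Ls' ! p0) (rss' ! p0)" using pc'[OF p0(1)] p0(2) by simp
  have "R \<subseteq> set (rss' ! p0)" using embed_in_pieces[OF P] by blast
  then show ?thesis using finite_subset by blast
qed


abbreviation "ns \<equiv> map length Ls"
abbreviation "ns' \<equiv> map length Ls'"

lemma nested_or_disj:
  assumes p: "p < length Ys" and p': "p' < length Ys'"
  shows "Ys' ! p' \<subseteq> Ys ! p \<or> Ys' ! p' \<inter> Ys ! p = {}"
proof -
  have "Ys' ! p' \<in> rcosets H" "Ys ! p \<in> rcosets K" using p p' Yss Yss' nth_mem by blast+
  then show ?thesis using coset_nested[OF Hs Ks HK] by blast
qed

lemma coords_zero_fun: "is_basis_of Y L \<Longrightarrow> coords L (\<lambda>x. 0) = 0\<^sub>v (length L)"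
  by (rule coords_unique) (auto simp: lincomb_def)

lemma entry:
  assumes p: "p < length Ys" and r: "r < length (Ls ! p)" and p': "p' < length Ys'" and r': "r' < length (Ls' ! p')"
  shows "coords B (B' ! (off ns' p' + r')) $ (off ns p + r) =
         (if Ys' ! p' \<subseteq> Ys ! p then coords (Ls ! p) (Ls' ! p' ! r') $ r else 0)"
proof -
  have e: "B' ! (off ns' p' + r') = Ls' ! p' ! r'" by (rule concat_nth_off) (use p' r' Lsl' in auto)
  have sp: "Ls' ! p' ! r' \<in> fun_space (Ys' ! p')" by (rule basis_in_space[OF pieceD(3)[OF pc'[OF p']] r'])
  have spc: "Ls' ! p' ! r' \<in> fun_space (carrier G)"
    using sp piece_space_sub[of "Ys' ! p'" "carrier G"] rcosets_sub_carrier[OF Hs] Yss' p' nth_mem by blast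
  have "coords B (Ls' ! p' ! r') $ (off ns p + r) = coords (Ls ! p) (restr (Ys ! p) (Ls' ! p' ! r')) $ r"
    by (rule partition_bases.concat_coords[OF pb spc p r])
  also have "\<dots> = (if Ys' ! p' \<subseteq> Ys ! p then coords (Ls ! p) (Ls' ! p' ! r') $ r else 0)"
  proof (cases "Ys' ! p' \<subseteq> Ys ! p")
    case True
    then have "restr (Ys ! p) (Ls' ! p' ! r') = Ls' ! p' ! r'"
      using restr_id sp piece_space_sub by blast
    then show ?thesis using True by simp
  next
    case False
    then have d: "Ys' ! p' \<inter> Ys ! p = {}" using nested_or_disj[OF p p'] by blast
    have "restr (Ys ! p) (Ls' ! p' ! r') = (\<lambda>x. 0)" by (rule restr_disj[OF sp d])
    then show ?thesis using False coords_zero_fun[OF pieceD(3)[OF pc[OF p]]] r by simp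
  qed
  finally show ?thesis unfolding e .
qed

abbreviation "dd \<equiv> rep_dim G"

definition pairbound :: "nat \<Rightarrow> nat \<Rightarrow> nat" where
  "pairbound p p' = (\<Sum>s<length (rss ! p). \<Sum>t<length (rss' ! p'). if rss ! p ! s = rss' ! p' ! t then dd (rss ! p ! s) else 0)"

lemma nnz_le:
  "(\<Sum>i<length B. \<Sum>j<length B'. if coords B (B' ! j) $ i \<noteq> 0 then 1 else (0::nat)) \<le>
   (\<Sum>p<length Ys. \<Sum>p'<length Ys'. if Ys' ! p' \<subseteq> Ys ! p then pairbound p p' else 0)"
proof -
  let ?N = "\<lambda>i j. if coords B (B' ! j) $ i \<noteq> 0 then 1 else (0::nat)"
  have "(\<Sum>i<length B. \<Sum>j<length B'. ?N i j) = (\<Sum>p<length ns. \<Sum>r<ns ! p. \<Sum>j<length B'. ?N (off ns p + r) j)"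
    unfolding length_concat by (rule sum_split)
  also have "\<dots> = (\<Sum>p<length Ys. \<Sum>r<length (Ls ! p). \<Sum>p'<length Ys'. \<Sum>r'<length (Ls' ! p'). ?N (off ns p + r) (off ns' p' + r'))"
    unfolding length_concat by (subst sum_split) (simp add: Lsl Lsl')
  also have "\<dots> = (\<Sum>p<length Ys. \<Sum>p'<length Ys'. \<Sum>r<length (Ls ! p). \<Sum>r'<length (Ls' ! p'). ?N (off ns p + r) (off ns' p' + r'))"
    by (rule sum.cong[OF refl]) (rule sum.swap)
  also have "\<dots> \<le> (\<Sum>p<length Ys. \<Sum>p'<length Ys'. if Ys' ! p' \<subseteq> Ys ! p then pairbound p p' else 0)"
  proof (intro sum_mono)
    fix p p' assume p: "p \<in> {..<length Ys}" and p': "p' \<in> {..<length Ys'}"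
    then have p: "p < length Ys" and p': "p' < length Ys'" by auto
    show "(\<Sum>r<length (Ls ! p). \<Sum>r'<length (Ls' ! p'). ?N (off ns p + r) (off ns' p' + r')) \<le>
          (if Ys' ! p' \<subseteq> Ys ! p then pairbound p p' else 0)"
    proof (cases "Ys' ! p' \<subseteq> Ys ! p")
      case True
      have "(\<Sum>r<length (Ls ! p). \<Sum>r'<length (Ls' ! p'). ?N (off ns p + r) (off ns' p' + r')) =
            (\<Sum>r<length (Ls ! p). \<Sum>r'<length (Ls' ! p'). if coords (Ls ! p) (Ls' ! p' ! r') $ r \<noteq> 0 then 1 else 0)"
        by (intro sum.cong refl) (simp add: entry[OF p _ p'] True)
      also have "\<dots> \<le> pairbound p p'" unfolding pairbound_def
        by (rule pair_nnz[OF pc[OF p] pc'[OF p'] True])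
      finally show ?thesis using True by simp
    next
      case False
      have "(\<Sum>r<length (Ls ! p). \<Sum>r'<length (Ls' ! p'). ?N (off ns p + r) (off ns' p' + r')) = 0"
        by (intro sum.neutral ballI) (simp add: entry[OF p _ p'] False)
      then show ?thesis by simp
    qed
  qed
  finally show ?thesis .
qed


abbreviation "q \<equiv> card K div card H"

lemma inner_count:
  assumes p: "p < length Ys"
  shows "card {p'. p' < length Ys' \<and> Ys' ! p' \<subseteq> Ys ! p} = q"
proof -
  let ?C = "{Y' \<in> rcosets H. Y' \<subseteq> Ys ! p}"
  have Y: "Ys ! p \<in> rcosets K" using p Yss nth_mem by blast
  have img: "(\<lambda>p'. Ys' ! p') ` {p'. p' < length Ys' \<and> Ys' ! p' \<subseteq> Ys ! p} = ?C"
  proof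
    show "(\<lambda>p'. Ys' ! p') ` {p'. p' < length Ys' \<and> Ys' ! p' \<subseteq> Ys ! p} \<subseteq> ?C"
    proof
      fix Y' assume "Y' \<in> (\<lambda>p'. Ys' ! p') ` {p'. p' < length Ys' \<and> Ys' ! p' \<subseteq> Ys ! p}"
      then obtain p' where "p' < length Ys'" "Ys' ! p' \<subseteq> Ys ! p" "Y' = Ys' ! p'" by blast
      then show "Y' \<in> ?C" using nth_mem[of p' Ys'] Yss' by simp
    qed
    show "?C \<subseteq> (\<lambda>p'. Ys' ! p') ` {p'. p' < length Ys' \<and> Ys' ! p' \<subseteq> Ys ! p}"
    proof
      fix Y' assume Y': "Y' \<in> ?C"
      then have "Y' \<in> set Ys'" using Yss' by simp
      then obtain p' where "p' < length Ys'" "Y' = Ys' ! p'" by (metis in_set_conv_nth)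
      then show "Y' \<in> (\<lambda>p'. Ys' ! p') ` {p'. p' < length Ys' \<and> Ys' ! p' \<subseteq> Ys ! p}" using Y' by blast
    qed
  qed
  have inj: "inj_on (\<lambda>p'. Ys' ! p') {p'. p' < length Ys' \<and> Ys' ! p' \<subseteq> Ys ! p}"
    using Ysd' by (auto simp: inj_on_def nth_eq_iff_index_eq)
  have "card {p'. p' < length Ys' \<and> Ys' ! p' \<subseteq> Ys ! p} = card ?C"
    using card_image[OF inj] img by simp
  moreover have "card ?C * card H = card K" by (rule count_inner[OF fin Hs Ks HK Y])
  moreover have "0 < card H" by (rule subgroup_card_pos[OF fin Hs])
  ultimately show ?thesis by (metis nonzero_mult_div_cancel_right not_gr0)
qed

lemma mult1:
  assumes p': "p' < length Ys'" and \<rho>: "\<rho> \<in> R"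
  shows "cnt (rss' ! p') \<rho> \<le> dd \<rho>"
proof -
  obtain x where x: "x \<in> carrier G" "Ys' ! p' = H #> x" using rcos_repr Yss' p' nth_mem by metis
  have "cnt (rss' ! p') \<rho> \<le> card {x} * dd \<rho>" unfolding cnt_def
  proof (rule multiplicity[OF pc'[OF p'] \<rho>])
    fix y assume "y \<in> Ys' ! p'"
    then show "\<exists>h\<in>H. \<exists>x'\<in>{x}. y = h \<otimes> x'" using x unfolding r_coset_def by auto
  qed (use x in auto)
  then show ?thesis by simp
qed

lemma multK:
  assumes p: "p < length Ys" and \<rho>: "\<rho> \<in> R"
  shows "cnt (rss ! p) \<rho> \<le> q * dd \<rho>"
proof -
  let ?C = "{Y' \<in> rcosets H. Y' \<subseteq> Ys ! p}"
  define rep where "rep = (\<lambda>Y'. SOME x. x \<in> carrier G \<and> Y' = H #> x)"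
  have rep: "rep Y' \<in> carrier G \<and> Y' = H #> rep Y'" if "Y' \<in> rcosets H" for Y'
    unfolding rep_def using rcos_repr[OF that] by (rule someI_ex[OF bexE]) auto
  have Y: "Ys ! p \<in> rcosets K" using p Yss nth_mem by blast
  have finC: "finite ?C"
  proof (rule finite_subset)
    show "?C \<subseteq> Pow (carrier G)" using rcosets_sub_carrier[OF Hs] by blast
  qed (use fin in simp)
  have cC: "card ?C = q"
  proof -
    have "card ?C * card H = card K" by (rule count_inner[OF fin Hs Ks HK Y])
    moreover have "0 < card H" by (rule subgroup_card_pos[OF fin Hs])
    ultimately show ?thesis by (metis nonzero_mult_div_cancel_right not_gr0)
  qed
  have "cnt (rss ! p) \<rho> \<le> card (rep ` ?C) * dd \<rho>" unfolding cnt_def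
  proof (rule multiplicity[OF pc[OF p] \<rho>])
    show "finite (rep ` ?C)" using finC by simp
    show "rep ` ?C \<subseteq> carrier G" using rep by auto
    fix y assume yY: "y \<in> Ys ! p"
    have yc: "y \<in> carrier G" using rcosets_sub_carrier[OF Ks Y] yY by blast
    have m: "H #> y \<in> rcosets H" by (rule rcosets_mem[OF yc])
    have yy: "y \<in> H #> y" by (rule rcos_self[OF yc Hs])
    have sub: "H #> y \<subseteq> Ys ! p" by (rule coset_nested[OF Hs Ks HK m Y]) (use yy yY in blast)
    then have inC: "H #> y \<in> ?C" using m by blast
    have "H #> y = H #> rep (H #> y)" using rep[OF m] by simp
    then have "y \<in> H #> rep (H #> y)" using yy by simp
    then obtain h where "h \<in> H" "y = h \<otimes> rep (H #> y)" unfolding r_coset_def by auto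
    then show "\<exists>h\<in>H. \<exists>x\<in>rep ` ?C. y = h \<otimes> x" using inC by blast
  qed
  also have "\<dots> \<le> q * dd \<rho>" using card_image_le[OF finC, of rep] cC by (intro mult_right_mono) auto
  finally show ?thesis .
qed

lemma per_p:
  assumes p: "p < length Ys"
  shows "(\<Sum>p'<length Ys'. if Ys' ! p' \<subseteq> Ys ! p then pairbound p p' else 0) \<le> q ^ 2 * d3 G R"
proof -
  let ?rs = "rss ! p"
  let ?I = "\<lambda>p'. Ys' ! p' \<subseteq> Ys ! p"
  have inR: "?rs ! s \<in> R" if "s < length ?rs" for s using piece_in_R[OF pc[OF p] that] .
  have pb_eq: "pairbound p p' = (\<Sum>s<length ?rs. cnt (rss' ! p') (?rs ! s) * dd (?rs ! s))" for p'
    unfolding pairbound_def by (simp add: cross_cnt)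
  have "(\<Sum>p'<length Ys'. if ?I p' then pairbound p p' else 0)
      = (\<Sum>p'<length Ys'. \<Sum>s<length ?rs. if ?I p' then cnt (rss' ! p') (?rs ! s) * dd (?rs ! s) else 0)"
    by (rule sum.cong) (simp_all add: pb_eq)
  also have "\<dots> = (\<Sum>s<length ?rs. \<Sum>p'<length Ys'. if ?I p' then cnt (rss' ! p') (?rs ! s) * dd (?rs ! s) else 0)"
    by (rule sum.swap)
  also have "\<dots> \<le> (\<Sum>s<length ?rs. \<Sum>p'<length Ys'. if ?I p' then dd (?rs ! s) * dd (?rs ! s) else 0)"
  proof (intro sum_mono)
    fix s p' assume s: "s \<in> {..<length ?rs}" and p': "p' \<in> {..<length Ys'}"
    show "(if ?I p' then cnt (rss' ! p') (?rs ! s) * dd (?rs ! s) else 0) \<le> (if ?I p' then dd (?rs ! s) * dd (?rs ! s) else 0)"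
      using mult1[of p' "?rs ! s"] inR[of s] s p' by (auto intro: mult_right_mono)
  qed
  also have "\<dots> = (\<Sum>s<length ?rs. q * (dd (?rs ! s) * dd (?rs ! s)))"
  proof (rule sum.cong[OF refl])
    fix s
    have "(\<Sum>p'<length Ys'. if ?I p' then dd (?rs ! s) * dd (?rs ! s) else 0)
        = (\<Sum>p'<length Ys'. if ?I p' then 1 else 0) * (dd (?rs ! s) * dd (?rs ! s))"
      by (simp add: sum_distrib_right if_distrib[of "\<lambda>a. a * _"] cong: if_cong)
    also have "(\<Sum>p'<length Ys'. if ?I p' then 1 else (0::nat)) = q"
      using inner_count[OF p] unfolding card_filter_sum .
    finally show "(\<Sum>p'<length Ys'. if ?I p' then dd (?rs ! s) * dd (?rs ! s) else 0) = q * (dd (?rs ! s) * dd (?rs ! s))" .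
  qed
  also have "\<dots> = (\<Sum>\<rho>\<in>R. cnt ?rs \<rho> * (q * (dd \<rho> * dd \<rho>)))"
    by (rule regroup[OF finR pieceD(5)[OF pc[OF p]]])
  also have "\<dots> \<le> (\<Sum>\<rho>\<in>R. (q * dd \<rho>) * (q * (dd \<rho> * dd \<rho>)))"
    by (intro sum_mono mult_right_mono multK[OF p]) auto
  also have "\<dots> = q ^ 2 * d3 G R" unfolding d3_def
    by (simp add: sum_distrib_left power2_eq_square power3_eq_cube mult.assoc mult.left_commute)
  finally show ?thesis .
qed

theorem step_bound:
  "sparse_matvec_ops (change_mat B B') < 2 * (q ^ 2 * card (rcosets K) * d3 G R)"
proof -
  let ?C = "change_mat B B'"
  have dims: "dim_row ?C = length B" "dim_col ?C = length B'" unfolding change_mat_def by auto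
  have one: "\<one> \<in> carrier G" by simp
  have lB: "0 < length B" by (rule basis_nonempty[OF bases(1) one])
  obtain j0 where j0: "j0 < length B'" "?C $$ (0, j0) \<noteq> 0" using change_row_nonzero[OF bases lB] by blast
  have "sparse_matvec_ops ?C + 1 \<le> 2 * (\<Sum>i<dim_row ?C. \<Sum>j<dim_col ?C. if ?C $$ (i, j) \<noteq> 0 then 1 else 0)"
    by (rule sparse_le) (use lB j0 dims in auto)
  also have "(\<Sum>i<dim_row ?C. \<Sum>j<dim_col ?C. if ?C $$ (i, j) \<noteq> 0 then 1 else (0::nat))
      = (\<Sum>i<length B. \<Sum>j<length B'. if coords B (B' ! j) $ i \<noteq> 0 then 1 else 0)"
    unfolding dims by (intro sum.cong refl) (simp add: change_mat_def)
  also have "\<dots> \<le> (\<Sum>p<length Ys. \<Sum>p'<length Ys'. if Ys' ! p' \<subseteq> Ys ! p then pairbound p p' else 0)"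
    by (rule nnz_le)
  also have "\<dots> \<le> (\<Sum>p<length Ys. q ^ 2 * d3 G R)" by (intro sum_mono per_p) auto
  also have "\<dots> = card (rcosets K) * (q ^ 2 * d3 G R)" using distinct_card[OF Ysd] Yss by simp
  finally show ?thesis by (simp add: mult.commute mult.left_commute)
qed

end


context group begin

lemma triv_irrep: "is_irrep G {\<one>} (\<lambda>_. 1\<^sub>m 1)"
  unfolding is_irrep_def Let_def rep_dim_def
proof (intro conjI notI)
  show "is_mat_rep G {\<one>} (dim_row (1\<^sub>m 1 :: complex mat)) (\<lambda>_. 1\<^sub>m 1)"
    unfolding is_mat_rep_def by simp
  show "0 < dim_row (1\<^sub>m 1 :: complex mat)" by simp
  assume "\<exists>W. is_invariant_subspace {\<one>} (dim_row (1\<^sub>m 1 :: complex mat)) (\<lambda>_. 1\<^sub>m 1) W \<and>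
      W \<noteq> {0\<^sub>v (dim_row (1\<^sub>m 1 :: complex mat))} \<and> W \<noteq> carrier_vec (dim_row (1\<^sub>m 1 :: complex mat))"
  then obtain W where W: "is_invariant_subspace {\<one>} 1 (\<lambda>_. 1\<^sub>m 1) W" "W \<noteq> {0\<^sub>v 1}" "W \<noteq> carrier_vec 1" by auto
  have Wc: "W \<subseteq> carrier_vec 1" and W0: "0\<^sub>v 1 \<in> W" and Ws: "\<And>a v. v \<in> W \<Longrightarrow> a \<cdot>\<^sub>v v \<in> W"
    using W(1) unfolding is_invariant_subspace_def by auto
  obtain v where v: "v \<in> W" "v \<noteq> 0\<^sub>v 1" using W(2) W0 by blast
  have vc: "v \<in> carrier_vec 1" using v Wc by blast
  have v0: "v $ 0 \<noteq> 0"
  proof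
    assume "v $ 0 = 0"
    then have "v = 0\<^sub>v 1" using vc by (intro eq_vecI) auto
    with v show False by simp
  qed
  have "carrier_vec 1 \<subseteq> W"
  proof
    fix w :: "complex vec" assume w: "w \<in> carrier_vec 1"
    have "(w $ 0 / v $ 0) \<cdot>\<^sub>v v = w" using w vc v0 by (intro eq_vecI) auto
    then show "w \<in> W" using Ws[OF v(1), of "w $ 0 / v $ 0"] by simp
  qed
  then show False using W(3) Wc by blast
qed

lemma triv_R:
  assumes "complete_irreps G {\<one>} R"
  shows "\<exists>\<rho>0\<in>R. rep_dim G \<rho>0 = 1 \<and> \<rho>0 \<one> = 1\<^sub>m 1"
proof -
  from assms triv_irrep obtain \<rho>0 where \<rho>0: "\<rho>0 \<in> R" "equiv_reps G {\<one>} (\<lambda>_. 1\<^sub>m 1) \<rho>0"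
    unfolding complete_irreps_def by blast
  have d: "rep_dim G \<rho>0 = 1" using \<rho>0(2) unfolding equiv_reps_def rep_dim_def by simp
  have "is_irrep G {\<one>} \<rho>0" using assms \<rho>0(1) unfolding complete_irreps_def by simp
  then have "\<rho>0 \<one> = 1\<^sub>m 1" using irrep_facts(1) d unfolding is_mat_rep_def by metis
  then show ?thesis using \<rho>0(1) d by blast
qed

definition delta :: "'a \<Rightarrow> 'a \<Rightarrow> complex" where
  "delta x = (\<lambda>y. if y = x then 1 else 0)"

lemma delta_basis: "is_basis_of {x} [delta x]"
  unfolding is_basis_of_def
proof (intro conjI ballI)
  show "set [delta x] \<subseteq> fun_space {x}" unfolding fun_space_def delta_def by auto
  fix f assume f: "f \<in> fun_space {x}"
  have fe: "f = lincomb (vec 1 (\<lambda>_. f x)) [delta x]"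
    using f unfolding lincomb_def delta_def fun_space_def by (auto intro!: ext)
  show "\<exists>!c. c \<in> carrier_vec (length [delta x]) \<and> f = lincomb c [delta x]"
  proof (rule ex1I[of _ "vec 1 (\<lambda>_. f x)"])
    show "vec 1 (\<lambda>_. f x) \<in> carrier_vec (length [delta x]) \<and> f = lincomb (vec 1 (\<lambda>_. f x)) [delta x]"
      using fe by simp
    fix c assume c: "c \<in> carrier_vec (length [delta x]) \<and> f = lincomb c [delta x]"
    then have "f x = c $ 0" unfolding lincomb_def delta_def by simp
    then show "c = vec 1 (\<lambda>_. f x)" using c by (intro eq_vecI) auto
  qed
qed

lemma triv_subgroup': "subgroup {\<one>} G"
  by (rule triv_subgroup)

lemma delta_piece:
  assumes R: "complete_irreps G {\<one>} R" and \<rho>0: "\<rho>0 \<in> R" "rep_dim G \<rho>0 = 1" "\<rho>0 \<one> = 1\<^sub>m 1"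
    and x: "x \<in> carrier G"
  shows "piece {\<one>} R {x} [delta x] [\<rho>0]"
  unfolding piece_def
proof (intro conjI ballI)
  show "subgroup {\<one>} G" by (rule triv_subgroup)
  show "complete_irreps G {\<one>} R" by (rule R)
  show "is_basis_of {x} [delta x]" by (rule delta_basis)
  show "set [\<rho>0] \<subseteq> R" using \<rho>0 by simp
  fix h assume h: "h \<in> {\<one>}"
  have cx: "{\<one>} #> x = {x}" using x unfolding r_coset_def by auto
  show "stable {x} h" using coset_stable[OF triv_subgroup x h] unfolding cx .
  have ra: "reg_act G h (delta x) = delta x" using h x unfolding reg_act_def delta_def by (auto intro!: ext)
  have am: "act_mat G [delta x] h = 1\<^sub>m 1"
    unfolding act_mat_def using coords_nth[OF delta_basis, of 0 x]
    by (intro eq_matI) (auto simp: ra)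
  have "block_diag (map (\<lambda>\<rho>. \<rho> h) [\<rho>0]) = 1\<^sub>m 1"
    using h \<rho>0(3) by (intro eq_matI) auto
  then show "act_mat G [delta x] h = block_diag (map (\<lambda>\<rho>. \<rho> h) [\<rho>0])" using am by simp
qed


definition has_pieces :: "'a set \<Rightarrow> 'a set \<Rightarrow> ('a \<Rightarrow> complex mat) set \<Rightarrow> ('a \<Rightarrow> complex) list \<Rightarrow> bool" where
  "has_pieces H K R B \<longleftrightarrow> (\<exists>Ys Ls rss. distinct Ys \<and> set Ys = rcosets K \<and> length Ls = length Ys \<and>
      length rss = length Ys \<and> (\<forall>p<length Ys. piece H R (Ys ! p) (Ls ! p) (rss ! p)) \<and> B = concat Ls)"

lemma B1_pieces:
  assumes R: "complete_irreps G {\<one>} R" and xs: "distinct xs" "set xs = carrier G"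
    and B1: "B1 = map (\<lambda>x y. if y = x then 1 else 0) xs"
  shows "has_pieces {\<one>} {\<one>} R B1"
proof -
  obtain \<rho>0 where \<rho>0: "\<rho>0 \<in> R" "rep_dim G \<rho>0 = 1" "\<rho>0 \<one> = 1\<^sub>m 1" using triv_R[OF R] by blast
  define Ys where "Ys = map (\<lambda>x. {x}) xs"
  define Ls where "Ls = map (\<lambda>x. [delta x]) xs"
  define rss where "rss = map (\<lambda>_. [\<rho>0]) xs"
  have "distinct Ys" unfolding Ys_def using xs(1) by (simp add: distinct_map inj_on_def)
  moreover have "set Ys = rcosets {\<one>}"
  proof -
    have "{\<one>} #> a = {a}" if "a \<in> carrier G" for a using that unfolding r_coset_def by auto
    then show ?thesis unfolding Ys_def RCOSETS_def using xs(2) by auto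
  qed
  moreover have "\<forall>p<length Ys. piece {\<one>} R (Ys ! p) (Ls ! p) (rss ! p)"
  proof (intro allI impI)
    fix p assume p: "p < length Ys"
    then have x: "xs ! p \<in> carrier G" using xs(2) nth_mem unfolding Ys_def by fastforce
    show "piece {\<one>} R (Ys ! p) (Ls ! p) (rss ! p)"
      using delta_piece[OF R \<rho>0 x] p unfolding Ys_def Ls_def rss_def by simp
  qed
  moreover have "B1 = concat Ls" unfolding B1 Ls_def delta_def by (induction xs) auto
  ultimately show ?thesis unfolding has_pieces_def
    by (intro exI[of _ Ys] exI[of _ Ls] exI[of _ rss]) (simp add: Ys_def Ls_def rss_def)
qed

lemma orb_pieces:
  assumes orb: "orbital_sab G Gs R j Bj" and i: "i \<in> {1..j}"
    and Si: "subgroup (Gs i) G" and Sj: "subgroup (Gs j) G" and ij: "Gs i \<subseteq> Gs j"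
    and Ri: "complete_irreps G (Gs i) (R i)"
  shows "has_pieces (Gs i) (Gs j) (R i) Bj"
proof -
  obtain Ys Ls where Y: "distinct Ys" "set Ys = rcosets (Gs j)" "length Ls = length Ys"
    and bs: "\<And>k. k < length Ys \<Longrightarrow> is_basis_of (Ys ! k) (Ls ! k)"
    and sa: "\<And>k. k < length Ys \<Longrightarrow> sym_adapted G (Gs i) (R i) (Ls ! k)"
    and Bj: "Bj = concat Ls"
    using orb i unfolding orbital_sab_def by blast
  have "\<forall>k. \<exists>\<rho>s. k < length Ys \<longrightarrow> set \<rho>s \<subseteq> R i \<and> (\<forall>h \<in> Gs i. act_mat G (Ls ! k) h = block_diag (map (\<lambda>\<rho>. \<rho> h) \<rho>s))"
    using sa unfolding sym_adapted_def by blast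
  then obtain f where f: "\<And>k. k < length Ys \<Longrightarrow> set (f k) \<subseteq> R i \<and> (\<forall>h \<in> Gs i. act_mat G (Ls ! k) h = block_diag (map (\<lambda>\<rho>. \<rho> h) (f k)))"
    by metis
  define rss where "rss = map f [0..<length Ys]"
  have "piece (Gs i) (R i) (Ys ! p) (Ls ! p) (rss ! p)" if p: "p < length Ys" for p
    unfolding piece_def
  proof (intro conjI ballI)
    show "subgroup (Gs i) G" by (rule Si)
    show "complete_irreps G (Gs i) (R i)" by (rule Ri)
    show "is_basis_of (Ys ! p) (Ls ! p)" by (rule bs[OF p])
    show "set (rss ! p) \<subseteq> R i" using f[OF p] p unfolding rss_def by simp
    fix h assume h: "h \<in> Gs i"
    show "act_mat G (Ls ! p) h = block_diag (map (\<lambda>\<rho>. \<rho> h) (rss ! p))" using f[OF p] p h unfolding rss_def by simp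
    have "Ys ! p \<in> rcosets (Gs j)" using Y(2) p nth_mem by blast
    then obtain x where x: "x \<in> carrier G" "Ys ! p = Gs j #> x" using rcos_repr by blast
    show "stable (Ys ! p) h" unfolding x(2) by (rule coset_stable[OF Sj x(1)]) (use h ij in blast)
  qed
  then show ?thesis unfolding has_pieces_def using Y Bj
    by (intro exI[of _ Ys] exI[of _ Ls] exI[of _ rss]) (simp add: rss_def)
qed

lemma step_from_pieces:
  assumes fin: "finite (carrier G)" and Hs: "subgroup H G" and Ks: "subgroup K G" and HK: "H \<subseteq> K"
    and P: "has_pieces H K R B" and P': "has_pieces H H R B'"
  shows "is_basis_of (carrier G) B" "is_basis_of (carrier G) B'"
    "sparse_matvec_ops (change_mat B B') < 2 * ((card K div card H) ^ 2 * card (rcosets K) * d3 G R)"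
proof -
  obtain Ys Ls rss where Y: "distinct Ys" "set Ys = rcosets K" "length Ls = length Ys" "length rss = length Ys"
    "\<And>p. p < length Ys \<Longrightarrow> piece H R (Ys ! p) (Ls ! p) (rss ! p)" "B = concat Ls"
    using P unfolding has_pieces_def by blast
  obtain Ys' Ls' rss' where Y': "distinct Ys'" "set Ys' = rcosets H" "length Ls' = length Ys'" "length rss' = length Ys'"
    "\<And>p. p < length Ys' \<Longrightarrow> piece H R (Ys' ! p) (Ls' ! p) (rss' ! p)" "B' = concat Ls'"
    using P' unfolding has_pieces_def by blast
  have st: "step G H K R Ys Ls rss Ys' Ls' rss'"
    by (rule step.intro[OF is_group step_axioms.intro]) (use fin Hs Ks HK Y Y' in auto)
  show "is_basis_of (carrier G) B" "is_basis_of (carrier G) B'"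
    using step.bases[OF st] Y(6) Y'(6) by auto
  show "sparse_matvec_ops (change_mat B B') < 2 * ((card K div card H) ^ 2 * card (rcosets K) * d3 G R)"
    using step.step_bound[OF st] Y(6) Y'(6) by simp
qed

end


lemma fold_change:
  assumes Bs: "\<And>j. j \<in> {1..n} \<Longrightarrow> is_basis_of Z (B j)" and f: "f \<in> fun_space Z"
  shows "1 \<le> m \<Longrightarrow> m \<le> n \<Longrightarrow> fold (\<lambda>j v. change_mat (B j) (B (j - 1)) *\<^sub>v v) [2..<Suc m] (coords (B 1) f) = coords (B m) f"
proof (induction m)
  case 0 then show ?case by simp
next
  case (Suc m)
  show ?case
  proof (cases "m = 0")
    case True then show ?thesis by simp
  next
    case False
    have e: "[2..<Suc (Suc m)] = [2..<Suc m] @ [Suc m]" using False by simp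
    have IH: "fold (\<lambda>j v. change_mat (B j) (B (j - 1)) *\<^sub>v v) [2..<Suc m] (coords (B 1) f) = coords (B m) f"
      using Suc False by simp
    have "fold (\<lambda>j v. change_mat (B j) (B (j - 1)) *\<^sub>v v) [2..<Suc (Suc m)] (coords (B 1) f)
        = change_mat (B (Suc m)) (B m) *\<^sub>v coords (B m) f" unfolding e using IH by simp
    also have "\<dots> = coords (B (Suc m)) f"
      by (rule change_mat_coords[OF Bs Bs f]) (use Suc False in auto)
    finally show ?thesis .
  qed
qed

lemma prod_tel:
  fixes c :: "nat \<Rightarrow> nat"
  assumes dv: "\<And>k. k \<in> {j+1..m} \<Longrightarrow> c (k - 1) dvd c k" and pos: "\<And>k. 0 < c k"
  shows "j \<le> m \<Longrightarrow> (\<Prod>k = j + 1..m. c k div c (k - 1)) * c j = c m"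
  using dv
proof (induction m)
  case 0 then show ?case by simp
next
  case (Suc m)
  show ?case
  proof (cases "j = Suc m")
    case True then show ?thesis by simp
  next
    case False
    then have jm: "j \<le> m" using Suc.prems by simp
    have IH: "(\<Prod>k = j + 1..m. c k div c (k - 1)) * c j = c m" using Suc.IH[OF jm] Suc.prems(2) by simp
    have "(\<Prod>k = j + 1..Suc m. c k div c (k - 1)) = (c (Suc m) div c m) * (\<Prod>k = j + 1..m. c k div c (k - 1))"
      using jm by (simp add: prod.nat_ivl_Suc')
    then have "(\<Prod>k = j + 1..Suc m. c k div c (k - 1)) * c j = (c (Suc m) div c m) * c m"
      using IH by (simp add: mult.assoc)
    also have "\<dots> = c (Suc m)" using Suc.prems(2)[of "Suc m"] jm by simp
    finally show ?thesis .
  qed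
qed

lemma (in group) theorem6_aux:
  fixes n :: nat
    and Gs :: "nat \<Rightarrow> 'a set"
    and R :: "nat \<Rightarrow> ('a \<Rightarrow> complex mat) set"
    and B :: "nat \<Rightarrow> ('a \<Rightarrow> complex) list"
  assumes fin: "finite (carrier G)"
    and n2: "2 \<le> n"
    and sub: "\<And>j. j \<in> {1..n} \<Longrightarrow> subgroup (Gs j) G"
    and G1: "Gs 1 = {\<one>\<^bsub>G\<^esub>}" and Gn: "Gs n = carrier G"
    and chain: "\<And>j. j \<in> {2..n} \<Longrightarrow> Gs (j - 1) \<subset> Gs j"
    and RG: "\<And>j. j \<in> {1..n} \<Longrightarrow> complete_irreps G (Gs j) (R j)"
    and compat: "\<exists>Bc. is_basis_of (carrier G) Bc \<and> (\<forall>i \<in> {1..n}. sym_adapted G (Gs i) (R i) Bc)"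
    and B1: "\<exists>xs. distinct xs \<and> set xs = carrier G \<and>
               B 1 = map (\<lambda>x y. if y = x then 1 else 0) xs"
    and Bj: "\<And>j. j \<in> {2..n} \<Longrightarrow> orbital_sab G Gs R j (B j)"
  shows "(\<forall>f \<in> fun_space (carrier G).
            coords (B n) f = fold (\<lambda>j v. change_mat (B j) (B (j - 1)) *\<^sub>v v) [2..<Suc n] (coords (B 1) f))
       \<and> (\<Sum>j = 2..n. sparse_matvec_ops (change_mat (B j) (B (j - 1))))
          < 2 * (\<Sum>j = 2..n. (card (Gs j) div card (Gs (j - 1))) ^ 2
                 * (\<Prod>k = j + 1..n. card (Gs k) div card (Gs (k - 1))) * d3 G (R (j - 1)))"
proof -
  have HP: "has_pieces (Gs (j - 1)) (Gs (j - 1)) (R (j - 1)) (B (j - 1))" if j: "j \<in> {2..n}" for j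
  proof (cases "j = 2")
    case True
    obtain xs where xs: "distinct xs" "set xs = carrier G" "B 1 = map (\<lambda>x y. if y = x then 1 else 0) xs"
      using B1 by blast
    have R1: "complete_irreps G {\<one>} (R 1)" using RG[of 1] n2 G1 by simp
    show ?thesis using B1_pieces[OF R1 xs(1,2) xs(3)] True G1 by simp
  next
    case False
    then have j1: "j - 1 \<in> {2..n}" using j by auto
    show ?thesis
      by (rule orb_pieces[OF Bj[OF j1]]) (use j1 sub RG in auto)
  qed
  have KP: "has_pieces (Gs (j - 1)) (Gs j) (R (j - 1)) (B j)" if j: "j \<in> {2..n}" for j
  proof -
    have j1: "j - 1 \<in> {1..n}" using j by auto
    show ?thesis
      by (rule orb_pieces[OF Bj[OF j]]) (use j sub[OF j1] RG[OF j1] sub[of j] chain[OF j] in auto)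
  qed
  have ST: "is_basis_of (carrier G) (B j) \<and> is_basis_of (carrier G) (B (j - 1)) \<and>
      sparse_matvec_ops (change_mat (B j) (B (j - 1))) < 2 * ((card (Gs j) div card (Gs (j - 1))) ^ 2 * card (rcosets (Gs j)) * d3 G (R (j - 1)))"
    if j: "j \<in> {2..n}" for j
  proof -
    have j1: "j - 1 \<in> {1..n}" and j0: "j \<in> {1..n}" using j by auto
    have HK: "Gs (j - 1) \<subseteq> Gs j" using chain[OF j] by blast
    show ?thesis using step_from_pieces[OF fin sub[OF j1] sub[OF j0] HK KP[OF j] HP[OF j]] by blast
  qed
  have bases: "is_basis_of (carrier G) (B j)" if j: "j \<in> {1..n}" for j
  proof (cases "j = 1")
    case True
    then show ?thesis using ST[of 2] n2 by simp
  next
    case False then show ?thesis using ST[of j] j by simp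
  qed
  have part1: "\<forall>f \<in> fun_space (carrier G).
            coords (B n) f = fold (\<lambda>j v. change_mat (B j) (B (j - 1)) *\<^sub>v v) [2..<Suc n] (coords (B 1) f)"
  proof
    fix f assume f: "f \<in> fun_space (carrier G)"
    have "fold (\<lambda>j v. change_mat (B j) (B (j - 1)) *\<^sub>v v) [2..<Suc n] (coords (B 1) f) = coords (B n) f"
      by (rule fold_change[where B=B and n=n, OF bases f]) (use n2 in auto)
    then show "coords (B n) f = fold (\<lambda>j v. change_mat (B j) (B (j - 1)) *\<^sub>v v) [2..<Suc n] (coords (B 1) f)"
      by simp
  qed
  define c where "c = (\<lambda>k. card (Gs k))"
  have cpos: "0 < c k" if "k \<in> {1..n}" for k unfolding c_def by (rule subgroup_card_pos[OF fin sub[OF that]])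
  have cdvd: "c (k - 1) dvd c k" if k: "k \<in> {2..n}" for k
  proof -
    have K: "subgroup (Gs k) G" using sub k by auto
    have k1: "k - 1 \<in> {1..n}" using k by auto
    have H: "subgroup (Gs (k - 1)) G" by (rule sub[OF k1])
    have "Gs k #> \<one> = Gs k" by (rule coset_mult_one[OF subgroup.subset[OF K]])
    then have Kc: "Gs k \<in> rcosets (Gs k)" using rcosets_mem[of \<one> "Gs k"] by simp
    have HK: "Gs (k - 1) \<subseteq> Gs k" using chain[OF k] by blast
    from count_inner[OF fin H K HK Kc] show ?thesis unfolding c_def by (metis dvd_triv_right)
  qed
  have cosets: "card (rcosets (Gs j)) = (\<Prod>k = j + 1..n. card (Gs k) div card (Gs (k - 1)))" if j: "j \<in> {2..n}" for j
  proof -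
    define c' where "c' = (\<lambda>k. if k \<in> {1..n} then c k else 1)"
    have c'pos: "0 < c' k" for k unfolding c'_def using cpos by auto
    have "(\<Prod>k = j + 1..n. c' k div c' (k - 1)) * c' j = c' n"
      by (rule prod_tel[OF _ c'pos]) (use j cdvd in \<open>auto simp: c'_def\<close>)
    moreover have "(\<Prod>k = j + 1..n. c' k div c' (k - 1)) = (\<Prod>k = j + 1..n. card (Gs k) div card (Gs (k - 1)))"
      by (rule prod.cong) (use j in \<open>auto simp: c'_def c_def\<close>)
    moreover have "c' j = card (Gs j)" "c' n = card (carrier G)" using j Gn n2 unfolding c'_def c_def by auto
    moreover have "card (rcosets (Gs j)) * card (Gs j) = card (carrier G)"
      by (rule card_cosets[OF fin]) (use sub j in auto)
    moreover have "0 < card (Gs j)" using cpos j unfolding c_def by auto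
    ultimately show ?thesis by (metis mult_right_cancel not_gr0)
  qed
  have part2: "(\<Sum>j = 2..n. sparse_matvec_ops (change_mat (B j) (B (j - 1))))
          < (\<Sum>j = 2..n. 2 * ((card (Gs j) div card (Gs (j - 1))) ^ 2
                 * (\<Prod>k = j + 1..n. card (Gs k) div card (Gs (k - 1))) * d3 G (R (j - 1))))"
  proof (rule sum_strict_mono)
    show "finite {2..n}" by simp
    show "{2..n} \<noteq> {}" using n2 by simp
    fix j assume j: "j \<in> {2..n}"
    show "sparse_matvec_ops (change_mat (B j) (B (j - 1))) < 2 * ((card (Gs j) div card (Gs (j - 1))) ^ 2
                 * (\<Prod>k = j + 1..n. card (Gs k) div card (Gs (k - 1))) * d3 G (R (j - 1)))"
      using ST[OF j] cosets[OF j] by simp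
  qed
  show ?thesis using part1 part2 by (simp add: sum_distrib_left)
qed


theorem theorem6:
  fixes G :: "('a, 'b) monoid_scheme"
    and n :: nat
    and Gs :: "nat \<Rightarrow> 'a set"
    and R :: "nat \<Rightarrow> ('a \<Rightarrow> complex mat) set"
    and B :: "nat \<Rightarrow> ('a \<Rightarrow> complex) list"
  assumes grp: "group G" and fin: "finite (carrier G)"
    and n2: "2 \<le> n"
    and sub: "\<And>j. j \<in> {1..n} \<Longrightarrow> subgroup (Gs j) G"
    and G1: "Gs 1 = {\<one>\<^bsub>G\<^esub>}" and Gn: "Gs n = carrier G"
    and chain: "\<And>j. j \<in> {2..n} \<Longrightarrow> Gs (j - 1) \<subset> Gs j"
    and RG: "\<And>j. j \<in> {1..n} \<Longrightarrow> complete_irreps G (Gs j) (R j)"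
    and compat: "\<exists>Bc. is_basis_of (carrier G) Bc \<and> (\<forall>i \<in> {1..n}. sym_adapted G (Gs i) (R i) Bc)"
    and B1: "\<exists>xs. distinct xs \<and> set xs = carrier G \<and>
               B 1 = map (\<lambda>x y. if y = x then 1 else 0) xs"
    and Bj: "\<And>j. j \<in> {2..n} \<Longrightarrow> orbital_sab G Gs R j (B j)"
  shows "(\<forall>f \<in> fun_space (carrier G).
            coords (B n) f = fold (\<lambda>j v. change_mat (B j) (B (j - 1)) *\<^sub>v v) [2..<Suc n] (coords (B 1) f))
       \<and> (\<Sum>j = 2..n. sparse_matvec_ops (change_mat (B j) (B (j - 1))))
          < 2 * (\<Sum>j = 2..n. (card (Gs j) div card (Gs (j - 1))) ^ 2
                 * (\<Prod>k = j + 1..n. card (Gs k) div card (Gs (k - 1))) * d3 G (R (j - 1)))"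
  using group.theorem6_aux[OF grp fin n2 sub G1 Gn chain RG compat B1 Bj] .


end
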